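(* Let $G$ be a simple loopless graph on the vertex set $[L]=\{1,\dots,L\}$ and let $(s_i)_{i=1}^{L}$ be a collection of $G$-independent semicircle variables in a $C^*$-probability space $(\mathcal{A},\tau)$ with faithful tracial state $\tau$. For any complex numbers $\alpha_1,\dots,\alpha_L$ and any integer $p\ge 1$, \[ \Big\|\sum_{i=1}^{L}\alpha_i s_i\Big\|_{2p}\le C_p^{\frac{1}{2p}}\min\Big\{\sum_{i=1}^{L}|\alpha_i|^2\,|c^*(i)|,\; p\sum_{i=1}^{L}|\alpha_i|^2\Big\}^{1/2}, \] where $|c^*(i)|$ is the size of the largest clique in $G$ containing $i$. In particular, \[ \Big\|\sum_{i=1}^{L}\alpha_i s_i\Big\|_{2p}\le C_p^{\frac{1}{2p}}\sqrt{\min(\omega(G),p)}\,\Big(\sum_{i=1}^{L}|\alpha_i|^2\Big)^{1/2}, \] where $\omega(G)$ is the clique number of $G$.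
   Context: $(\mathcal{A},\tau)$ is a unital $C^*$-algebra with a faithful tracial state $\tau$. For $u\in\mathcal{A}$, $\|u\|_{2p}:=\tau((uu^* )^p)^{1/(2p)}$. $C_p=\frac{1}{p+1}\binom{2p}{p}$ is the $p$-th Catalan number. A semicircle variable is a self-adjoint element whose distribution under $\tau$ is the standard semicircle law (density $\frac{1}{2\pi}\sqrt{4-x^2}$ on $[-2,2]$). Given a simple loopless graph $G$ on $[L]$, unital subalgebras $\mathcal{A}_1,\dots,\mathcal{A}_L\subset\mathcal{A}$ are $G$-independent if: (i) for every edge $(i,j)\in E(G)$, $\mathcal{A}_i$ and $\mathcal{A}_j$ are classically independent (they commute, and $\tau(ab)=\tau(a)\tau(b)$-type factorization holds; in particular mixed products of centered elements from distinct commuting algebras have trace zero); (ii) for every $k\ge1$ and index sequence $(i_1,\dots,i_k)\in[L]^k$ such that whenever $i_{j_1}=i_{j_2}$ with $j_1<j_2$ there is $j_3$ with $j_1<j_3<j_2$ and $(i_{j_1},i_{j_3})\notin E(G)$, one has $\tau(a_1\cdots a_k)=0$ for all $a_j\in\mathcal{A}_{i_j}$ with $\tau(a_j)=0$. Variables $s_1,\dots,s_L$ are $G$-independent if the unital $*$-subalgebras they generate are. Edges of $G$ thus correspond to classically independent (commuting) pairs and non-edges to free pairs. *)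

theory Defs
  imports "HOL-Analysis.Analysis"
begin

text \<open>The ambient type is a real
Banach algebra with unit; the complex scalar multiplication (extending the real one),
the involution and the state are explicit parameters.\<close>

definition cstar_tracial_space ::
  "(complex \<Rightarrow> 'a::{real_normed_algebra_1,banach} \<Rightarrow> 'a) \<Rightarrow> ('a \<Rightarrow> 'a) \<Rightarrow> ('a \<Rightarrow> complex) \<Rightarrow> bool"
where
  "cstar_tracial_space smul star tau \<longleftrightarrow>
     \<comment> \<open>complex algebra structure\<close>
     (\<forall>r x. smul (complex_of_real r) x = r *\<^sub>R x) \<and>
     (\<forall>c d x. smul (c * d) x = smul c (smul d x)) \<and>
     (\<forall>c d x. smul (c + d) x = smul c x + smul d x) \<and>
     (\<forall>c x y. smul c (x + y) = smul c x + smul c y) \<and>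
     (\<forall>c x y. smul c (x * y) = smul c x * y) \<and>
     (\<forall>c x y. smul c (x * y) = x * smul c y) \<and>
     (\<forall>c x. norm (smul c x) = cmod c * norm x) \<and>
     \<comment> \<open>involution and C*-identity\<close>
     (\<forall>x y. star (x + y) = star x + star y) \<and>
     (\<forall>c x. star (smul c x) = smul (cnj c) (star x)) \<and>
     (\<forall>x y. star (x * y) = star y * star x) \<and>
     (\<forall>x. star (star x) = x) \<and>
     (\<forall>x. norm (star x * x) = norm x ^ 2) \<and>
     \<comment> \<open>faithful tracial state\<close>
     (\<forall>x y. tau (x + y) = tau x + tau y) \<and>
     (\<forall>c x. tau (smul c x) = c * tau x) \<and>
     tau 1 = 1 \<and>
     (\<forall>x. Im (tau (star x * x)) = 0 \<and> Re (tau (star x * x)) \<ge> 0) \<and>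
     (\<forall>x. tau (star x * x) = 0 \<longrightarrow> x = 0) \<and>
     (\<forall>x y. tau (x * y) = tau (y * x))"

inductive_set gen_star_alg ::
  "(complex \<Rightarrow> 'a::ring_1 \<Rightarrow> 'a) \<Rightarrow> ('a \<Rightarrow> 'a) \<Rightarrow> 'a \<Rightarrow> 'a set"
  for smul star s
where
  gen: "s \<in> gen_star_alg smul star s"
| one: "1 \<in> gen_star_alg smul star s"
| add: "x \<in> gen_star_alg smul star s \<Longrightarrow> y \<in> gen_star_alg smul star s \<Longrightarrow> x + y \<in> gen_star_alg smul star s"
| mult: "x \<in> gen_star_alg smul star s \<Longrightarrow> y \<in> gen_star_alg smul star s \<Longrightarrow> x * y \<in> gen_star_alg smul star s"
| scale: "x \<in> gen_star_alg smul star s \<Longrightarrow> smul c x \<in> gen_star_alg smul star s"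
| star: "x \<in> gen_star_alg smul star s \<Longrightarrow> star x \<in> gen_star_alg smul star s"

text \<open>Standard semicircle element: self-adjoint with the moments of the semicircle law
(the distribution of a bounded self-adjoint element is determined by its moments).\<close>
definition semicircle_var :: "('a::monoid_mult \<Rightarrow> 'a) \<Rightarrow> ('a \<Rightarrow> complex) \<Rightarrow> 'a \<Rightarrow> bool" where
  "semicircle_var star tau s \<longleftrightarrow> star s = s \<and>
     (\<forall>k::nat. tau (s ^ k) =
        complex_of_real (integral {-2..2::real} (\<lambda>x. x ^ k * sqrt (4 - x\<^sup>2) / (2 * pi))))"

definition simple_graph :: "nat \<Rightarrow> (nat \<Rightarrow> nat \<Rightarrow> bool) \<Rightarrow> bool" where
  "simple_graph L E \<longleftrightarrow> (\<forall>i j. E i j \<longrightarrow> E j i) \<and> (\<forall>i. \<not> E i i) \<and>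
     (\<forall>i j. E i j \<longrightarrow> i \<in> {1..L} \<and> j \<in> {1..L})"

definition is_clique :: "nat \<Rightarrow> (nat \<Rightarrow> nat \<Rightarrow> bool) \<Rightarrow> nat set \<Rightarrow> bool" where
  "is_clique L E C \<longleftrightarrow> C \<subseteq> {1..L} \<and> (\<forall>i\<in>C. \<forall>j\<in>C. i \<noteq> j \<longrightarrow> E i j)"

definition max_clique_at :: "nat \<Rightarrow> (nat \<Rightarrow> nat \<Rightarrow> bool) \<Rightarrow> nat \<Rightarrow> nat" where
  "max_clique_at L E i = Max {card C | C. is_clique L E C \<and> i \<in> C}"

definition clique_number :: "nat \<Rightarrow> (nat \<Rightarrow> nat \<Rightarrow> bool) \<Rightarrow> nat" where
  "clique_number L E = Max {card C | C. is_clique L E C}"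

definition G_independent ::
  "nat \<Rightarrow> (nat \<Rightarrow> nat \<Rightarrow> bool) \<Rightarrow> ('a::ring_1 \<Rightarrow> complex) \<Rightarrow> (nat \<Rightarrow> 'a set) \<Rightarrow> bool" where
  "G_independent L E tau A \<longleftrightarrow>
     (\<forall>i\<in>{1..L}. \<forall>j\<in>{1..L}. E i j \<longrightarrow>
        (\<forall>a\<in>A i. \<forall>b\<in>A j. a * b = b * a \<and> tau (a * b) = tau a * tau b)) \<and>
     (\<forall>k::nat. \<forall>idx::nat \<Rightarrow> nat. \<forall>a::nat \<Rightarrow> 'a.
        k \<ge> 1 \<longrightarrow> (\<forall>j<k. idx j \<in> {1..L}) \<longrightarrow>
        (\<forall>j1 j2. j1 < j2 \<and> j2 < k \<and> idx j1 = idx j2 \<longrightarrow>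
           (\<exists>j3. j1 < j3 \<and> j3 < j2 \<and> \<not> E (idx j1) (idx j3))) \<longrightarrow>
        (\<forall>j<k. a j \<in> A (idx j) \<and> tau (a j) = 0) \<longrightarrow>
        tau (prod_list (map a [0..<k])) = 0)"

definition norm_2p :: "('a::monoid_mult \<Rightarrow> 'a) \<Rightarrow> ('a \<Rightarrow> complex) \<Rightarrow> nat \<Rightarrow> 'a \<Rightarrow> real" where
  "norm_2p star tau p u = Re (tau ((u * star u) ^ p)) powr (1 / (2 * real p))"

definition catalan :: "nat \<Rightarrow> real" where
  "catalan p = real (2 * p choose p) / real (p + 1)"

end

theory Submission
  imports Defs "HOL-Analysis.Analysis"
begin


definition symirr :: "(nat \<Rightarrow> nat \<Rightarrow> bool) \<Rightarrow> bool" where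
  "symirr E \<longleftrightarrow> (\<forall>i j. E i j \<longrightarrow> E j i) \<and> (\<forall>i. \<not> E i i)"

fun popx :: "(nat \<Rightarrow> nat \<Rightarrow> bool) \<Rightarrow> nat \<Rightarrow> nat list \<Rightarrow> nat list option" where
  "popx E y [] = None"
| "popx E y (z # r) = (if z = y then Some r else if E z y then map_option (Cons z) (popx E y r) else None)"

fun popn :: "(nat \<Rightarrow> nat \<Rightarrow> bool) \<Rightarrow> nat \<Rightarrow> nat \<Rightarrow> nat list \<Rightarrow> nat list option" where
  "popn E y 0 r = Some r"
| "popn E y (Suc b) r = Option.bind (popx E y r) (popn E y b)"

fun cntp :: "(nat \<Rightarrow> nat \<Rightarrow> bool) \<Rightarrow> (nat \<times> nat) list \<Rightarrow> nat list \<Rightarrow> nat" where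
  "cntp E [] r = (if r = [] then 1 else 0)"
| "cntp E ((y,m) # ws) r = (\<Sum>b\<le>m. case popn E y b r of None \<Rightarrow> 0 | Some r' \<Rightarrow> cntp E ws (replicate (m-b) y @ r'))"

definition swp :: "(nat \<Rightarrow> nat \<Rightarrow> bool) \<Rightarrow> nat list \<Rightarrow> nat list \<Rightarrow> bool" where
  "swp E r r' \<longleftrightarrow> (\<exists>A a b B. r = A @ a # b # B \<and> r' = A @ b # a # B \<and> E a b)"

lemma swp_Cons: "swp E r r' \<Longrightarrow> swp E (z # r) (z # r')"
  unfolding swp_def by (metis append_Cons)

lemma swps_Cons: "(swp E)\<^sup>*\<^sup>* r r' \<Longrightarrow> (swp E)\<^sup>*\<^sup>* (z # r) (z # r')"
  by (induction rule: rtranclp_induct) (auto intro: rtranclp.rtrancl_into_rtrancl swp_Cons)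

lemma swps_app: "(swp E)\<^sup>*\<^sup>* r r' \<Longrightarrow> (swp E)\<^sup>*\<^sup>* (C @ r) (C @ r')"
  by (induction C) (auto intro: swps_Cons)

lemma popx_swp_base:
  assumes "symirr E" "E a b"
  shows "(popx E y (a # b # B) = None \<longleftrightarrow> popx E y (b # a # B) = None) \<and>
    (\<forall>r r'. popx E y (a # b # B) = Some r \<longrightarrow> popx E y (b # a # B) = Some r' \<longrightarrow> (swp E)\<^sup>*\<^sup>* r r')"
proof -
  have ab: "a \<noteq> b" "E b a" using assms unfolding symirr_def by auto
  show ?thesis
  proof (cases "y = a")
    case True then show ?thesis using ab by auto
  next
    case ya: False
    show ?thesis
    proof (cases "y = b")
      case True then show ?thesis using ab assms(2) by auto
    next
      case False
      have "swp E (a # b # r) (b # a # r)" for r unfolding swp_def using assms(2) by (metis append_Nil)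
      then show ?thesis using ya False by (auto split: option.splits)
    qed
  qed
qed

lemma popx_swp:
  assumes "symirr E" "swp E r r'"
  shows "(popx E y r = None \<longleftrightarrow> popx E y r' = None) \<and>
    (\<forall>q q'. popx E y r = Some q \<longrightarrow> popx E y r' = Some q' \<longrightarrow> (swp E)\<^sup>*\<^sup>* q q')"
proof -
  obtain A a b B where r: "r = A @ a # b # B" "r' = A @ b # a # B" "E a b"
    using assms(2) unfolding swp_def by blast
  show ?thesis unfolding r(1,2)
  proof (induction A)
    case Nil then show ?case using popx_swp_base[OF assms(1) r(3)] by simp
  next
    case (Cons z A)
    have s: "swp E (A @ a # b # B) (A @ b # a # B)" unfolding swp_def using r(3) by blast
    show ?case using Cons s by (auto split: option.splits intro: swps_Cons)
  qed
qed

lemma popx_swps: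
  assumes "symirr E" "(swp E)\<^sup>*\<^sup>* r r'"
  shows "(popx E y r = None \<longleftrightarrow> popx E y r' = None) \<and>
    (\<forall>q q'. popx E y r = Some q \<longrightarrow> popx E y r' = Some q' \<longrightarrow> (swp E)\<^sup>*\<^sup>* q q')"
  using assms(2)
proof (induction rule: rtranclp_induct)
  case base then show ?case by auto
next
  case (step r1 r2)
  note ps = popx_swp[OF assms(1) step(2), of y]
  show ?case
  proof (cases "popx E y r")
    case None then show ?thesis using step ps by auto
  next
    case (Some q)
    then obtain q1 where q1: "popx E y r1 = Some q1" using step by auto
    then obtain q2 where q2: "popx E y r2 = Some q2" using ps by auto
    show ?thesis using step ps Some q1 q2 by (auto intro: rtranclp_trans)
  qed
qed

lemma popn_swps:
  assumes "symirr E" "(swp E)\<^sup>*\<^sup>* r r'"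
  shows "(popn E y b r = None \<longleftrightarrow> popn E y b r' = None) \<and>
    (\<forall>q q'. popn E y b r = Some q \<longrightarrow> popn E y b r' = Some q' \<longrightarrow> (swp E)\<^sup>*\<^sup>* q q')"
  using assms(2)
proof (induction b arbitrary: r r')
  case 0 then show ?case by auto
next
  case (Suc b)
  note ps = popx_swps[OF assms(1) Suc(2), of y]
  show ?case
  proof (cases "popx E y r")
    case None then show ?thesis using ps by auto
  next
    case (Some q)
    then obtain q' where q': "popx E y r' = Some q'" using ps by auto
    have "(swp E)\<^sup>*\<^sup>* q q'" using ps Some q' by auto
    from Suc(1)[OF this] show ?thesis using Some q' by auto
  qed
qed

lemma cntp_swps:
  assumes "symirr E" "(swp E)\<^sup>*\<^sup>* r r'"
  shows "cntp E ws r = cntp E ws r'"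
  using assms(2)
proof (induction ws arbitrary: r r')
  case Nil
  have "r = [] \<longleftrightarrow> r' = []"
    using Nil by (induction rule: rtranclp_induct) (auto simp: swp_def)
  then show ?case by simp
next
  case (Cons w ws)
  obtain y m where w: "w = (y,m)" by fastforce
  have "(case popn E y b r of None \<Rightarrow> 0 | Some q \<Rightarrow> cntp E ws (replicate (m-b) y @ q)) =
        (case popn E y b r' of None \<Rightarrow> 0 | Some q \<Rightarrow> cntp E ws (replicate (m-b) y @ q))" for b
  proof -
    note ps = popn_swps[OF assms(1) Cons(2), of y b]
    show ?thesis
    proof (cases "popn E y b r")
      case None then show ?thesis using ps by auto
    next
      case (Some q)
      then obtain q' where q': "popn E y b r' = Some q'" using ps by auto
      have "(swp E)\<^sup>*\<^sup>* q q'" using ps Some q' by auto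
      then have "cntp E ws (replicate (m-b) y @ q) = cntp E ws (replicate (m-b) y @ q')"
        using Cons(1) swps_app by blast
      then show ?thesis using Some q' by simp
    qed
  qed
  then show ?case unfolding w by simp
qed


lemma cntp_prefix_eq:
  assumes "\<And>r. cntp E Q1 r = cntp E Q2 r"
  shows "cntp E (R @ Q1) r = cntp E (R @ Q2) r"
proof (induction R arbitrary: r)
  case Nil then show ?case using assms by simp
next
  case (Cons w R)
  obtain y m where w: "w = (y,m)" by fastforce
  show ?case unfolding w using Cons by (simp split: option.split cong: option.case_cong)
qed

lemma case_opt_add:
  "(case opt of None \<Rightarrow> (0::nat) | Some q \<Rightarrow> f q + g q) =
   (case opt of None \<Rightarrow> 0 | Some q \<Rightarrow> f q) + (case opt of None \<Rightarrow> 0 | Some q \<Rightarrow> g q)"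
  by (cases opt) auto

lemma cntp_prefix_add:
  assumes "\<And>r. cntp E Q r = cntp E Q1 r + cntp E Q2 r"
  shows "cntp E (R @ Q) r = cntp E (R @ Q1) r + cntp E (R @ Q2) r"
proof (induction R arbitrary: r)
  case Nil then show ?case using assms by simp
next
  case (Cons w R)
  obtain y m where w: "w = (y,m)" by fastforce
  show ?case unfolding w using Cons by (simp add: case_opt_add sum.distrib cong: option.case_cong)
qed

lemma cntp_zero_letter: "cntp E ((x,0) # Q) r = cntp E Q r"
  by simp

lemma popn_Suc_right: "popn E y (Suc b) r = Option.bind (popn E y b r) (popx E y)"
proof (induction b arbitrary: r)
  case 0 then show ?case by (cases "popx E y r") auto
next
  case (Suc b)
  show ?case
  proof (cases "popx E y r")
    case None then show ?thesis by simp
  next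
    case (Some a)
    have "popn E y (Suc b) a = Option.bind (popn E y b a) (popx E y)" by (rule Suc.IH)
    then show ?thesis using Some by simp
  qed
qed

lemma popn0_fun: "popn E y 0 = Some"
  by (rule ext) simp

lemma popx_rep_same: "popx E x (replicate (Suc k) x @ q) = Some (replicate k x @ q)"
  by simp

lemma cntp_merge1:
  "cntp E ((x,m) # (x,1) # Q) r = cntp E ((x,Suc m) # Q) r + (if m = 0 then 0 else cntp E ((x,m-1) # Q) r)"
proof -
  define f where "f b = (case popn E x b r of None \<Rightarrow> 0 | Some q \<Rightarrow> cntp E Q (replicate (Suc m - b) x @ q))" for b
  define g where "g b = (case popn E x b r of None \<Rightarrow> 0 | Some q \<Rightarrow> cntp E Q (replicate (m - 1 - b) x @ q))" for b
  define h where "h b = (case popn E x b r of None \<Rightarrow> 0 | Some q \<Rightarrow>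
        (case popx E x (replicate (m-b) x @ q) of None \<Rightarrow> 0 | Some q2 \<Rightarrow> cntp E Q q2))" for b
  have inner: "(\<Sum>b2\<le>Suc 0. case popn E x b2 (replicate (m-b) x @ q) of None \<Rightarrow> 0
        | Some q2 \<Rightarrow> cntp E Q (replicate (Suc 0 - b2) x @ q2)) =
      cntp E Q (replicate (Suc m - b) x @ q) + (case popx E x (replicate (m-b) x @ q) of None \<Rightarrow> 0 | Some q2 \<Rightarrow> cntp E Q q2)"
    if "b \<le> m" for b q
  proof -
    have "replicate (Suc m - b) x = x # replicate (m-b) x" using that by (simp add: Suc_diff_le)
    then show ?thesis by (simp add: atMost_Suc split: option.split)
  qed
  have L: "cntp E ((x,m) # (x,1) # Q) r = (\<Sum>b\<le>m. f b + h b)"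
    unfolding f_def h_def
    apply (simp add: inner case_opt_add popn0_fun sum.distrib cong: option.case_cong)
    apply (intro sum.cong refl)
    by (simp add: Suc_diff_le split: option.split)
  have hg: "h b = g b" if "b < m" for b
  proof -
    have "replicate (m-b) x = replicate (Suc (m-1-b)) x" using that by (simp add: Suc_diff_Suc)
    then show ?thesis unfolding h_def g_def by (simp split: option.split)
  qed
  have hm: "h m = f (Suc m)"
    unfolding h_def f_def popn_Suc_right by (simp split: option.split)
  have "(\<Sum>b\<le>m. h b) = (\<Sum>b<m. g b) + f (Suc m)"
    using hg hm by (simp add: lessThan_Suc_atMost[symmetric])
  moreover have "(\<Sum>b<m. g b) = (if m = 0 then 0 else (\<Sum>b\<le>m-1. g b))"
    by (cases m) (auto simp: lessThan_Suc_atMost)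
  moreover have "cntp E ((x,Suc m) # Q) r = (\<Sum>b\<le>Suc m. f b)"
    unfolding f_def by simp
  moreover have "cntp E ((x,m-1) # Q) r = (\<Sum>b\<le>m-1. g b)"
    unfolding g_def by (simp del: One_nat_def)
  ultimately show ?thesis unfolding L sum.distrib by simp
qed

lemma popx_rep_other:
  assumes "E z y" "z \<noteq> y"
  shows "popx E y (replicate n z @ q) = map_option ((@) (replicate n z)) (popx E y q)"
  using assms by (cases "popx E y q") (induction n; auto)+

lemma popn_rep_other:
  assumes "E z y" "z \<noteq> y"
  shows "popn E y k (replicate n z @ q) = map_option ((@) (replicate n z)) (popn E y k q)"
proof (induction k arbitrary: q)
  case 0 then show ?case by simp
next
  case (Suc k)
  show ?case using Suc by (cases "popx E y q") (auto simp: popx_rep_other[of E z y, OF assms])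
qed

lemma popx_comm:
  assumes "symirr E" "E x y"
  shows "Option.bind (popx E y r) (popx E x) = Option.bind (popx E x r) (popx E y)"
proof -
  have xy: "x \<noteq> y" "E y x" using assms unfolding symirr_def by auto
  show ?thesis
  proof (induction r)
    case Nil then show ?case by simp
  next
    case (Cons z r)
    show ?case
    proof (cases "z = y")
      case True then show ?thesis using xy assms(2) by (cases "popx E x r") auto
    next
      case zy: False
      show ?thesis
      proof (cases "z = x")
        case True then show ?thesis using xy assms(2) zy by (cases "popx E y r") auto
      next
        case False
        then show ?thesis using zy Cons
          by (cases "popx E y r"; cases "popx E x r") (auto split: option.splits simp: bind_map_option comp_def)
      qed
    qed
  qed
qed


lemma popn_Suc_fun: "popn E y (Suc b) = (\<lambda>r. Option.bind (popx E y r) (popn E y b))"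
  by (rule ext) simp

lemma popx_popn_comm:
  assumes "symirr E" "E x y"
  shows "Option.bind (popx E y r) (popn E x k) = Option.bind (popn E x k r) (popx E y)"
proof (induction k arbitrary: r)
  case 0 then show ?case by (simp add: popn0_fun)
next
  case (Suc k)
  have "Option.bind (popx E y r) (popn E x (Suc k)) = Option.bind (Option.bind (popx E y r) (popx E x)) (popn E x k)"
    by (simp add: popn_Suc_fun)
  also have "\<dots> = Option.bind (Option.bind (popx E x r) (popx E y)) (popn E x k)"
    using popx_comm[OF assms] by simp
  also have "\<dots> = Option.bind (popx E x r) (\<lambda>q. Option.bind (popx E y q) (popn E x k))" by simp
  also have "\<dots> = Option.bind (popx E x r) (\<lambda>q. Option.bind (popn E x k q) (popx E y))"
    using Suc by simp
  also have "\<dots> = Option.bind (popn E x (Suc k) r) (popx E y)" by simp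
  finally show ?case .
qed

lemma popn_popn_comm:
  assumes "symirr E" "E x y"
  shows "Option.bind (popn E y j r) (popn E x k) = Option.bind (popn E x k r) (popn E y j)"
proof (induction j arbitrary: r)
  case 0 then show ?case by (simp add: popn0_fun)
next
  case (Suc j)
  have "Option.bind (popn E y (Suc j) r) (popn E x k) = Option.bind (popx E y r) (\<lambda>q. Option.bind (popn E y j q) (popn E x k))"
    by simp
  also have "\<dots> = Option.bind (popx E y r) (\<lambda>q. Option.bind (popn E x k q) (popn E y j))"
    using Suc by simp
  also have "\<dots> = Option.bind (Option.bind (popx E y r) (popn E x k)) (popn E y j)" by simp
  also have "\<dots> = Option.bind (Option.bind (popn E x k r) (popx E y)) (popn E y j)"
    using popx_popn_comm[OF assms] by simp
  also have "\<dots> = Option.bind (popn E x k r) (popn E y (Suc j))" by (simp add: popn_Suc_fun)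
  finally show ?case .
qed

lemma swps_one_rep:
  assumes "E y x"
  shows "(swp E)\<^sup>*\<^sup>* (y # replicate m x @ q) (replicate m x @ y # q)"
proof (induction m)
  case 0 then show ?case by simp
next
  case (Suc m)
  have "swp E (y # x # replicate m x @ q) (x # y # replicate m x @ q)"
    unfolding swp_def using assms by (metis append_Nil)
  moreover have "(swp E)\<^sup>*\<^sup>* (x # y # replicate m x @ q) (x # replicate m x @ y # q)"
    using Suc swps_Cons by blast
  ultimately show ?case by (simp add: converse_rtranclp_into_rtranclp)
qed

lemma swps_rep_rep:
  assumes "E y x"
  shows "(swp E)\<^sup>*\<^sup>* (replicate n y @ replicate m x @ q) (replicate m x @ replicate n y @ q)"
proof (induction n)
  case 0 then show ?case by simp
next
  case (Suc n)
  have "(swp E)\<^sup>*\<^sup>* (y # replicate n y @ replicate m x @ q) (y # replicate m x @ replicate n y @ q)"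
    using Suc swps_Cons by blast
  moreover have "(swp E)\<^sup>*\<^sup>* (y # replicate m x @ replicate n y @ q) (replicate m x @ y # replicate n y @ q)"
    using swps_one_rep[of E y x, OF assms] by blast
  ultimately show ?case by (simp add: rtranclp_trans)
qed

lemma case_bind_sum:
  assumes "E z x" "z \<noteq> x"
  shows "(case opt of None \<Rightarrow> (0::nat) | Some q \<Rightarrow> (\<Sum>b2\<in>S. case popn E x b2 (replicate n z @ q) of None \<Rightarrow> 0 | Some q2 \<Rightarrow> G b2 q2))
   = (\<Sum>b2\<in>S. case Option.bind opt (popn E x b2) of None \<Rightarrow> 0 | Some q \<Rightarrow> G b2 (replicate n z @ q))"
proof (cases opt)
  case None then show ?thesis by simp
next
  case (Some q)
  show ?thesis unfolding Some using popn_rep_other[of E z x, OF assms]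
    by (auto intro!: sum.cong split: option.split)
qed

lemma cntp_swap:
  assumes "symirr E" "E x y"
  shows "cntp E ((y,b) # (x,a) # Q) r = cntp E ((x,a) # (y,b) # Q) r"
proof -
  have xy: "x \<noteq> y" "E y x" "y \<noteq> x" using assms unfolding symirr_def by auto
  have L: "cntp E ((y,b) # (x,a) # Q) r = (\<Sum>b1\<le>b. \<Sum>b2\<le>a.
      case Option.bind (popn E y b1 r) (popn E x b2) of None \<Rightarrow> 0
      | Some q \<Rightarrow> cntp E Q (replicate (a-b2) x @ replicate (b-b1) y @ q))"
    by (simp add: case_bind_sum[of E y x, OF xy(2,3)] cong: option.case_cong)
  have R: "cntp E ((x,a) # (y,b) # Q) r = (\<Sum>b2\<le>a. \<Sum>b1\<le>b.
      case Option.bind (popn E x b2 r) (popn E y b1) of None \<Rightarrow> 0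
      | Some q \<Rightarrow> cntp E Q (replicate (b-b1) y @ replicate (a-b2) x @ q))"
    by (simp add: case_bind_sum[of E x y, OF assms(2) xy(1)] cong: option.case_cong)
  have pt: "(case Option.bind (popn E y b1 r) (popn E x b2) of None \<Rightarrow> 0
      | Some q \<Rightarrow> cntp E Q (replicate (a-b2) x @ replicate (b-b1) y @ q)) =
     (case Option.bind (popn E x b2 r) (popn E y b1) of None \<Rightarrow> 0
      | Some q \<Rightarrow> cntp E Q (replicate (b-b1) y @ replicate (a-b2) x @ q))" for b1 b2
  proof -
    have eq: "Option.bind (popn E y b1 r) (popn E x b2) = Option.bind (popn E x b2 r) (popn E y b1)"
      using popn_popn_comm[OF assms] .
    have "cntp E Q (replicate (a-b2) x @ replicate (b-b1) y @ q) = cntp E Q (replicate (b-b1) y @ replicate (a-b2) x @ q)" for q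
      using cntp_swps[OF assms(1) swps_rep_rep[of E x y]] assms(2) by metis
    then show ?thesis unfolding eq by (simp split: option.split)
  qed
  show ?thesis unfolding L R pt by (rule sum.swap)
qed


definition nonred :: "(nat \<Rightarrow> nat \<Rightarrow> bool) \<Rightarrow> (nat \<times> nat) list \<Rightarrow> bool" where
  "nonred E w \<longleftrightarrow> (\<exists>A x a C b B. w = A @ (x,a) # C @ (x,b) # B \<and> (\<forall>c\<in>set C. E x (fst c)))"

definition red_idx :: "(nat \<Rightarrow> nat \<Rightarrow> bool) \<Rightarrow> (nat \<times> nat) list \<Rightarrow> bool" where
  "red_idx E w \<longleftrightarrow> (\<forall>j1 j2. j1 < j2 \<and> j2 < length w \<and> fst (w!j1) = fst (w!j2) \<longrightarrow>
      (\<exists>j3. j1 < j3 \<and> j3 < j2 \<and> \<not> E (fst (w!j1)) (fst (w!j3))))"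

lemma red_idx_if:
  assumes "\<not> nonred E w"
  shows "red_idx E w"
  unfolding red_idx_def
proof (intro allI impI, rule ccontr)
  fix j1 j2
  assume h: "j1 < j2 \<and> j2 < length w \<and> fst (w!j1) = fst (w!j2)"
    and n: "\<not> (\<exists>j3. j1 < j3 \<and> j3 < j2 \<and> \<not> E (fst (w!j1)) (fst (w!j3)))"
  define d where "d = j2 - Suc j1"
  define A where "A = take j1 w"
  define C where "C = take d (drop (Suc j1) w)"
  define B where "B = drop (Suc j2) w"
  have j1: "j1 < length w" using h by auto
  have w1: "w = A @ w!j1 # drop (Suc j1) w"
    unfolding A_def using j1 by (simp add: Cons_nth_drop_Suc)
  have dd: "drop d (drop (Suc j1) w) = drop j2 w" unfolding d_def using h by simp
  have w2: "drop (Suc j1) w = C @ w!j2 # B"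
    unfolding C_def B_def using h by (metis append_take_drop_id dd Cons_nth_drop_Suc)
  have w3: "w = A @ (fst (w!j1), snd (w!j1)) # C @ (fst (w!j1), snd (w!j2)) # B"
  proof -
    have e2: "w!j2 = (fst (w!j1), snd (w!j2))" using h by (metis prod.collapse)
    show ?thesis using w1 w2 e2 by (metis prod.collapse)
  qed
  have "\<forall>c\<in>set C. E (fst (w!j1)) (fst c)"
  proof
    fix c assume "c \<in> set C"
    then obtain t where t: "t < length C" "c = C ! t" by (metis in_set_conv_nth)
    have lc: "length C \<le> d" unfolding C_def by simp
    have "c = w ! (Suc j1 + t)" using t h unfolding C_def by (simp add: nth_drop)
    moreover have "j1 < Suc j1 + t" "Suc j1 + t < j2" using t lc unfolding d_def by auto
    ultimately show "E (fst (w!j1)) (fst c)" using n by blast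
  qed
  then have "nonred E w" unfolding nonred_def using w3 by blast
  then show False using assms by simp
qed

lemma nonred_rev: "nonred E w \<Longrightarrow> nonred E (rev w)"
  unfolding nonred_def
proof (elim exE conjE)
  fix A x a C b B
  assume w: "w = A @ (x, a) # C @ (x, b) # B" and c: "\<forall>c\<in>set C. E x (fst c)"
  have "rev w = rev B @ (x,b) # rev C @ (x,a) # rev A" using w by simp
  then show "\<exists>A x a C b B. rev w = A @ (x, a) # C @ (x, b) # B \<and> (\<forall>c\<in>set C. E x (fst c))"
    using c by fastforce
qed

definition stk :: "(nat \<times> nat) list \<Rightarrow> nat list" where
  "stk P = concat (map (\<lambda>(y,k). replicate k y) (rev P))"

lemma stk_snoc: "stk (P @ [(y,k)]) = replicate k y @ stk P"
  unfolding stk_def by simp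

lemma stk_Nil: "stk [] = []" unfolding stk_def by simp

lemma stk_empty_iff: "stk P = [] \<longleftrightarrow> (\<forall>l\<in>set P. snd l = 0)"
  unfolding stk_def by auto

lemma nonred_app: "nonred E P \<Longrightarrow> nonred E (P @ Q)"
  unfolding nonred_def by fastforce

lemma nopop:
  assumes "symirr E" "\<not> nonred E (P @ [(y,m)])" "\<forall>l\<in>set P. snd l \<ge> 1"
  shows "popx E y (stk P) = None"
  using assms(2,3)
proof (induction P rule: rev_induct)
  case Nil then show ?case by (simp add: stk_Nil)
next
  case (snoc l P)
  obtain z k where l: "l = (z,k)" by fastforce
  have k: "k \<ge> 1" using snoc.prems l by auto
  then obtain k' where k': "k = Suc k'" by (cases k) auto
  have st: "stk (P @ [l]) = replicate k z @ stk P" unfolding l stk_snoc ..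
  show ?case
  proof (cases "z = y")
    case True
    have "nonred E ((P @ [l]) @ [(y,m)])"
      unfolding nonred_def l True
      by (intro exI[of _ P] exI[of _ y] exI[of _ k] exI[of _ "[]"] exI[of _ m]) auto
    then show ?thesis using snoc.prems by simp
  next
    case zy: False
    show ?thesis
    proof (cases "E z y")
      case False then show ?thesis unfolding st k' using zy by simp
    next
      case True
      have Ezy: "E y z" using True assms(1) unfolding symirr_def by auto
      have "\<not> nonred E (P @ [(y,m)])"
      proof
        assume "nonred E (P @ [(y,m)])"
        then obtain A x a C b B where w: "P @ [(y,m)] = A @ (x,a) # C @ (x,b) # B"
          and c: "\<forall>c\<in>set C. E x (fst c)" unfolding nonred_def by blast
        have "nonred E ((P @ [l]) @ [(y,m)])"
        proof (cases B rule: rev_cases)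
          case Nil
          then have "(A @ (x,a) # C) @ [(x,b)] = P @ [(y,m)]" using w by simp
          then have "P = A @ (x,a) # C" "x = y" "b = m" by auto
          then show ?thesis unfolding nonred_def l
            using c Ezy by (intro exI[of _ A] exI[of _ x] exI[of _ a] exI[of _ "C @ [(z,k)]"] exI[of _ m] exI[of _ "[]"]) auto
        next
          case (snoc B' l')
          then have "(A @ (x,a) # C @ (x,b) # B') @ [l'] = P @ [(y,m)]" using w by simp
          then have "P = A @ (x,a) # C @ (x,b) # B'" "l' = (y,m)" by auto
          then show ?thesis unfolding nonred_def l
            using c by (intro exI[of _ A] exI[of _ x] exI[of _ a] exI[of _ C] exI[of _ b] exI[of _ "B' @ [(z,k),(y,m)]"]) auto
        qed
        then show False using snoc.prems by simp
      qed
      then have "popx E y (stk P) = None" using snoc by simp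
      then show ?thesis unfolding st using popx_rep_other[of E z y, OF True zy] by simp
    qed
  qed
qed

lemma cntp_red_zero:
  assumes "symirr E"
  shows "\<not> nonred E (P @ ws) \<Longrightarrow> \<forall>l\<in>set (P @ ws). snd l \<ge> 1 \<Longrightarrow> P @ ws \<noteq> [] \<Longrightarrow> cntp E ws (stk P) = 0"
proof (induction ws arbitrary: P)
  case Nil
  then obtain l where "l \<in> set P" by (metis append_Nil2 ex_in_conv set_empty)
  then have "snd l \<ge> 1" using Nil.prems by auto
  then have "stk P \<noteq> []" unfolding stk_empty_iff using \<open>l \<in> set P\<close> by fastforce
  then show ?case by simp
next
  case (Cons w ws)
  obtain y m where w: "w = (y,m)" by fastforce
  have nr: "\<not> nonred E (P @ [(y,m)])"
    using Cons.prems(1) nonred_app[of E "P @ [(y,m)]" ws] w by auto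
  have np: "popx E y (stk P) = None"
    using nopop[OF assms nr] Cons.prems(2) by auto
  have z0: "cntp E ws (stk (P @ [(y,m)])) = 0"
    using Cons.IH[of "P @ [(y,m)]"] Cons.prems w by auto
  have "(case popn E y b (stk P) of None \<Rightarrow> 0 | Some r' \<Rightarrow> cntp E ws (replicate (m-b) y @ r')) = 0" for b
  proof (cases b)
    case 0 then show ?thesis using z0 by (simp add: stk_snoc)
  next
    case (Suc b') then show ?thesis using np by simp
  qed
  then show ?case unfolding w by simp
qed

lemma cntp_F1:
  assumes "symirr E" "\<not> nonred E w" "\<forall>l\<in>set w. snd l \<ge> 1" "w \<noteq> []"
  shows "cntp E (rev w) [] = 0"
proof -
  have "\<not> nonred E (rev w)" using assms(2) nonred_rev[of E "rev w"] by auto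
  then show ?thesis using cntp_red_zero[OF assms(1), of "[]" "rev w"] assms(3,4) by (simp add: stk_Nil)
qed


fun chebsum :: "(nat \<Rightarrow> complex) \<Rightarrow> nat \<Rightarrow> nat \<Rightarrow> complex" where
  "chebsum g 0 b = g b"
| "chebsum g (Suc 0) b = g (Suc b) + (if b = 0 then 0 else g (b - 1))"
| "chebsum g (Suc (Suc a)) b = chebsum (\<lambda>k. g (Suc k) + (if k = 0 then 0 else g (k - 1))) (Suc a) b - chebsum g a b"

definition okw :: "nat \<Rightarrow> (nat \<times> nat) list \<Rightarrow> bool" where
  "okw L w \<longleftrightarrow> fst ` set w \<subseteq> {1..L}"

definition good :: "nat \<Rightarrow> (nat \<Rightarrow> nat \<Rightarrow> bool) \<Rightarrow> ((nat \<times> nat) list \<Rightarrow> complex) \<Rightarrow> bool" where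
  "good L E \<phi> \<longleftrightarrow> \<phi> [] = 1 \<and>
    (\<forall>A x B. okw L (A @ (x,0) # B) \<longrightarrow> \<phi> (A @ (x,0) # B) = \<phi> (A @ B)) \<and>
    (\<forall>A x a y b B. okw L (A @ (x,a) # (y,b) # B) \<longrightarrow> E x y \<longrightarrow>
        \<phi> (A @ (x,a) # (y,b) # B) = \<phi> (A @ (y,b) # (x,a) # B)) \<and>
    (\<forall>A x m B. okw L (A @ (x,m) # B) \<longrightarrow>
        \<phi> (A @ (x,1) # (x,m) # B) = \<phi> (A @ (x,Suc m) # B) + (if m = 0 then 0 else \<phi> (A @ (x,m-1) # B))) \<and>
    (\<forall>w. okw L w \<longrightarrow> w \<noteq> [] \<longrightarrow> (\<forall>l\<in>set w. snd l \<ge> 1) \<longrightarrow> \<not> nonred E w \<longrightarrow> \<phi> w = 0)"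

lemma okw_app: "okw L (A @ B) \<longleftrightarrow> okw L A \<and> okw L B"
  unfolding okw_def by auto

lemma okw_Cons: "okw L (l # B) \<longleftrightarrow> fst l \<in> {1..L} \<and> okw L B"
  unfolding okw_def by auto

lemma merge_gen:
  assumes g: "good L E \<phi>"
  shows "okw L (A @ (x,a) # (x,b) # B) \<Longrightarrow> \<phi> (A @ (x,a) # (x,b) # B) = chebsum (\<lambda>k. \<phi> (A @ (x,k) # B)) a b"
proof (induction a arbitrary: A b B rule: less_induct)
  case (less a)
  have F4: "\<And>A x B. okw L (A @ (x,0) # B) \<Longrightarrow> \<phi> (A @ (x,0) # B) = \<phi> (A @ B)"
    using g unfolding good_def by blast
  have F3: "\<And>A x m B. okw L (A @ (x,m) # B) \<Longrightarrow>
        \<phi> (A @ (x,1) # (x,m) # B) = \<phi> (A @ (x,Suc m) # B) + (if m = 0 then 0 else \<phi> (A @ (x,m-1) # B))"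
    using g unfolding good_def by blast
  have ok: "okw L A" "x \<in> {1..L}" "okw L B" using less.prems by (auto simp: okw_app okw_Cons)
  show ?case
  proof (cases a)
    case 0 then show ?thesis using F4[of A x "(x,b) # B"] ok by (simp add: okw_app okw_Cons)
  next
    case (Suc a1)
    show ?thesis
    proof (cases a1)
      case 0 then show ?thesis using Suc F3[of A x b B] ok by (simp add: okw_app okw_Cons)
    next
      case (Suc a2)
      have aa: "a = Suc (Suc a2)" using Suc \<open>a = Suc a1\<close> by simp
      have e1: "\<phi> (A @ (x,1) # (x,Suc a2) # (x,b) # B) = \<phi> (A @ (x,a) # (x,b) # B) + \<phi> (A @ (x,a2) # (x,b) # B)"
        using F3[of A x "Suc a2" "(x,b) # B"] ok aa by (simp add: okw_app okw_Cons)
      have e2: "\<phi> ((A @ [(x,1)]) @ (x,Suc a2) # (x,b) # B) = chebsum (\<lambda>k. \<phi> ((A @ [(x,1)]) @ (x,k) # B)) (Suc a2) b"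
        using less.IH[of "Suc a2" "A @ [(x,1)]" b B] aa ok by (simp add: okw_app okw_Cons)
      have e3: "\<phi> (A @ (x,a2) # (x,b) # B) = chebsum (\<lambda>k. \<phi> (A @ (x,k) # B)) a2 b"
        using less.IH[of a2 A b B] aa ok by (simp add: okw_app okw_Cons)
      have fe: "(\<lambda>k. \<phi> ((A @ [(x,1)]) @ (x,k) # B)) = (\<lambda>k. \<phi> (A @ (x,Suc k) # B) + (if k = 0 then 0 else \<phi> (A @ (x,k-1) # B)))"
        using F3 ok by (auto simp: okw_app okw_Cons)
      have "\<phi> (A @ (x,a) # (x,b) # B) + chebsum (\<lambda>k. \<phi> (A @ (x,k) # B)) a2 b =
          chebsum (\<lambda>k. \<phi> (A @ (x,Suc k) # B) + (if k = 0 then 0 else \<phi> (A @ (x,k-1) # B))) (Suc a2) b"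
        using e1 e2 e3 unfolding fe by simp
      then show ?thesis unfolding aa by (simp add: eq_diff_eq)
    qed
  qed
qed

lemma move_gen:
  assumes g: "good L E \<phi>" and s: "symirr E"
  shows "okw L (A @ C @ (x,b) # B) \<Longrightarrow> \<forall>c\<in>set C. E x (fst c) \<Longrightarrow> \<phi> (A @ C @ (x,b) # B) = \<phi> (A @ (x,b) # C @ B)"
proof (induction C arbitrary: A)
  case Nil then show ?case by simp
next
  case (Cons c C)
  have F2: "\<And>A x a y b B. okw L (A @ (x,a) # (y,b) # B) \<Longrightarrow> E x y \<Longrightarrow>
        \<phi> (A @ (x,a) # (y,b) # B) = \<phi> (A @ (y,b) # (x,a) # B)"
    using g unfolding good_def by blast
  obtain c1 c2 where c: "c = (c1,c2)" by fastforce
  have E1: "E c1 x" using Cons.prems(2) s c unfolding symirr_def by auto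
  have "\<phi> (A @ (c # C) @ (x,b) # B) = \<phi> ((A @ [c]) @ C @ (x,b) # B)" by simp
  also have "\<dots> = \<phi> ((A @ [c]) @ (x,b) # C @ B)"
    using Cons.IH[of "A @ [c]"] Cons.prems by (auto simp: okw_app okw_Cons)
  also have "\<dots> = \<phi> (A @ (c1,c2) # (x,b) # C @ B)" using c by simp
  also have "\<dots> = \<phi> (A @ (x,b) # (c1,c2) # C @ B)"
    using F2[of A c1 c2 x b "C @ B"] E1 Cons.prems(1) c by (auto simp: okw_app okw_Cons)
  finally show ?case using c by simp
qed

lemma uniq:
  assumes g1: "good L E \<phi>1" and g2: "good L E \<phi>2" and s: "symirr E"
  shows "okw L w \<Longrightarrow> \<phi>1 w = \<phi>2 w"
proof (induction w rule: measure_induct_rule[where f = length])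
  case (less w)
  show ?case
  proof (cases "\<exists>l\<in>set w. snd l = 0")
    case True
    then obtain l where l: "l \<in> set w" "snd l = 0" by blast
    then obtain A B where w: "w = A @ l # B" by (metis split_list)
    obtain x where lx: "l = (x,0)" using l by (metis prod.collapse)
    have h1: "\<phi>1 w = \<phi>1 (A @ B)"
      using g1 less.prems unfolding good_def w lx by blast
    have "\<phi>2 w = \<phi>2 (A @ B)"
      using g2 less.prems unfolding good_def w lx by blast
    moreover have "\<phi>1 (A @ B) = \<phi>2 (A @ B)"
      using less.IH[of "A @ B"] less.prems unfolding w by (simp add: okw_app okw_Cons)
    ultimately show ?thesis using h1 by simp
  next
    case nz: False
    show ?thesis
    proof (cases "w = []")
      case True then show ?thesis using g1 g2 unfolding good_def by simp
    next
      case ne: False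
      show ?thesis
      proof (cases "nonred E w")
        case False
        have "\<forall>l\<in>set w. snd l \<ge> 1" using nz by auto
        then show ?thesis using g1 g2 False ne less.prems unfolding good_def by auto
      next
        case True
        then obtain A x a C b B where w: "w = A @ (x,a) # C @ (x,b) # B" and c: "\<forall>c\<in>set C. E x (fst c)"
          unfolding nonred_def by blast
        have ok: "okw L ((A @ [(x,a)]) @ C @ (x,b) # B)" using less.prems w by simp
        have m1: "\<phi>1 w = \<phi>1 (A @ (x,a) # (x,b) # C @ B)"
          using move_gen[OF g1 s ok c] w by simp
        have m2: "\<phi>2 w = \<phi>2 (A @ (x,a) # (x,b) # C @ B)"
          using move_gen[OF g2 s ok c] w by simp
        have ok2: "okw L (A @ (x,a) # (x,b) # C @ B)" using less.prems w by (auto simp: okw_app okw_Cons)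
        have "(\<lambda>k. \<phi>1 (A @ (x,k) # C @ B)) = (\<lambda>k. \<phi>2 (A @ (x,k) # C @ B))"
          using less.IH less.prems unfolding w by (auto simp: okw_app okw_Cons)
        then show ?thesis using m1 m2 merge_gen[OF g1 ok2] merge_gen[OF g2 ok2] by simp
      qed
    qed
  qed
qed


definition phic :: "(nat \<Rightarrow> nat \<Rightarrow> bool) \<Rightarrow> (nat \<times> nat) list \<Rightarrow> complex" where
  "phic E w = of_nat (cntp E (rev w) [])"

lemma good_phic:
  assumes s: "symirr E"
  shows "good L E (phic E)"
  unfolding good_def
proof (intro conjI allI impI)
  show "phic E [] = 1" unfolding phic_def by simp
next
  fix A x B
  have "cntp E (rev B @ (x,0) # rev A) [] = cntp E (rev B @ rev A) []"
    by (rule cntp_prefix_eq) simp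
  then show "phic E (A @ (x,0) # B) = phic E (A @ B)" unfolding phic_def by simp
next
  fix A x a y b B
  assume "E x y"
  have "cntp E (rev B @ (y,b) # (x,a) # rev A) [] = cntp E (rev B @ (x,a) # (y,b) # rev A) []"
    by (rule cntp_prefix_eq) (rule cntp_swap[OF s \<open>E x y\<close>])
  then show "phic E (A @ (x,a) # (y,b) # B) = phic E (A @ (y,b) # (x,a) # B)"
    unfolding phic_def by simp
next
  fix A x m B
  show "phic E (A @ (x,1) # (x,m) # B) = phic E (A @ (x,Suc m) # B) + (if m = 0 then 0 else phic E (A @ (x,m-1) # B))"
  proof (cases m)
    case 0
    have "cntp E (rev B @ (x,m) # (x,1) # rev A) [] = cntp E (rev B @ (x,Suc m) # rev A) []"
      by (rule cntp_prefix_eq) (simp add: 0)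
    then show ?thesis unfolding phic_def using 0 by simp
  next
    case (Suc m')
    have "cntp E (rev B @ (x,m) # (x,1) # rev A) [] = cntp E (rev B @ (x,Suc m) # rev A) [] + cntp E (rev B @ (x,m-1) # rev A) []"
    proof (rule cntp_prefix_add)
      fix r show "cntp E ((x,m) # (x,1) # rev A) r = cntp E ((x,Suc m) # rev A) r + cntp E ((x,m-1) # rev A) r"
        using cntp_merge1[of E x m "rev A" r] Suc by (simp del: cntp.simps)
    qed
    then show ?thesis unfolding phic_def using Suc by simp
  qed
next
  fix w :: "(nat \<times> nat) list"
  assume "w \<noteq> []" "\<forall>l\<in>set w. snd l \<ge> 1" "\<not> nonred E w"
  then show "phic E w = 0" unfolding phic_def using cntp_F1[OF s] by simp
qed


fun H :: "nat \<Rightarrow> nat \<Rightarrow> nat" where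
  "H 0 j = (if j = 0 then 1 else 0)"
| "H (Suc k) j = (if j = 0 then 0 else H k (j - 1)) + H k (Suc j)"

lemma H_zero: "odd (n + h) \<or> h > n \<Longrightarrow> H n h = 0"
proof (induction n arbitrary: h)
  case 0 then show ?case by (cases h) simp_all
next
  case (Suc n)
  have a: "H n (h - 1) = 0" if "h \<noteq> 0"
  proof (rule Suc.IH)
    show "odd (n + (h - 1)) \<or> h - 1 > n" using Suc.prems that by auto
  qed
  have b: "H n (Suc h) = 0"
  proof (rule Suc.IH)
    show "odd (n + Suc h) \<or> Suc h > n" using Suc.prems by auto
  qed
  show ?case using a b by simp
qed

lemma H_gt: "h > n \<Longrightarrow> H n h = 0" using H_zero by blast

lemma H_diag: "H n n = 1"
  by (induction n) (auto simp: H_gt)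

lemma H_closed:
  "int (H (h + 2*r) h) = int ((h + 2*r) choose r) - (if r = 0 then 0 else int ((h + 2*r) choose (r - 1)))"
proof (induction "h + 2*r" arbitrary: h r)
  case 0 then show ?case by simp
next
  case (Suc n)
  note N = Suc.hyps(2)
  show ?case
  proof (cases r)
    case 0 then show ?thesis using H_diag by simp
  next
    case (Suc r1)
    note r = Suc
    have t2: "int (H n (Suc h)) = int (n choose r1) - (if r1 = 0 then 0 else int (n choose (r1 - 1)))"
      using Suc.hyps(1)[of "Suc h" r1] N r by simp
    show ?thesis
    proof (cases h)
      case 0
      have n: "n = 2 * r1 + 1" using N r 0 by simp
      have sym: "n choose Suc r1 = n choose r1"
        using binomial_symmetric[of r1 n] n by simp
      have "int (H (Suc n) 0) = int (H n 1)" by simp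
      moreover have "Suc n choose r = (n choose r1) + (n choose Suc r1)" using r by simp
      moreover have "r1 = 0 \<Longrightarrow> Suc n choose r1 = 1" by simp
      moreover have "r1 \<noteq> 0 \<Longrightarrow> Suc n choose r1 = (n choose (r1 - 1)) + (n choose r1)"
        by (cases r1) auto
      ultimately show ?thesis using t2 sym N 0 r by (cases "r1 = 0") auto
    next
      case (Suc h1)
      have t1: "int (H n h1) = int (n choose r) - (if r = 0 then 0 else int (n choose (r - 1)))"
        using Suc.hyps(1)[of h1 r] N Suc by simp
      have e: "int (H (Suc n) h) = int (H n h1) + int (H n (Suc h))" using Suc by simp
      have p1: "Suc n choose r = (n choose r1) + (n choose Suc r1)" using r by simp
      have p2: "r1 \<noteq> 0 \<Longrightarrow> Suc n choose r1 = (n choose (r1 - 1)) + (n choose r1)"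
        by (cases r1) auto
      show ?thesis using e t1 t2 p1 p2 N r Suc by (cases "r1 = 0") auto
    qed
  qed
qed

definition catalan' :: "nat \<Rightarrow> real" where
  "catalan' p = real (2 * p choose p) / real (p + 1)"

lemma H_catalan: "real (H (2*p) 0) = real (2 * p choose p) / real (p + 1)"
proof (cases p)
  case 0 then show ?thesis by simp
next
  case (Suc q)
  have c: "int (H (2*p) 0) = int (2*p choose p) - int (2*p choose q)"
    using H_closed[of 0 p] Suc by simp
  have e: "Suc (q + p) = 2*p" "Suc q = p" using Suc by simp_all
  have m: "p * (2*p choose p) = (p+1) * (2*p choose q)"
  proof -
    have "Suc q * (Suc (q + p) choose Suc q) = Suc p * (Suc (q + p) choose q)"
      by (rule Suc_times_binomial_add)
    then show ?thesis unfolding e by simp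
  qed
  have "real (H (2*p) 0) = real (2*p choose p) - real (2*p choose q)"
    using c by (metis of_int_of_nat_eq of_int_diff)
  also have "\<dots> = real (2 * p choose p) / real (p + 1)"
  proof -
    have "real p * real (2*p choose p) = real (p+1) * real (2*p choose q)"
      using m by (metis of_nat_mult)
    then show ?thesis by (simp add: field_simps)
  qed
  finally show ?thesis .
qed

lemma H_odd0: "odd n \<Longrightarrow> H n 0 = 0" using H_zero by simp


lemma deriv_G:
  fixes x :: real
  assumes "-2 < x" "x < 2"
  shows "((\<lambda>x. x^k * ((4 - x^2) * sqrt (4 - x^2))) has_real_derivative
      (4 * real k * x^(k-1) * sqrt (4 - x^2) - (real k + 3) * x^(k+1) * sqrt (4 - x^2))) (at x)"
proof -
  have pos: "4 - x^2 > 0"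
  proof -
    have "(2 - x) * (2 + x) > 0" using assms by (intro mult_pos_pos) auto
    then show ?thesis by (simp add: power2_eq_square algebra_simps)
  qed
  define s where "s = sqrt (4 - x^2)"
  have s2: "s^2 = 4 - x^2" "s > 0" unfolding s_def using pos by auto
  have d1: "((\<lambda>x. 4 - x^2) has_real_derivative (-(2*x))) (at x)"
    by (auto intro!: derivative_eq_intros)
  have d2: "((\<lambda>x. sqrt (4 - x^2)) has_real_derivative (inverse s / 2) * (-(2*x))) (at x)"
    unfolding s_def by (rule DERIV_chain'[OF d1 DERIV_real_sqrt[OF pos]])
  have d3: "((\<lambda>x. (4 - x^2) * sqrt (4 - x^2)) has_real_derivative (-(2*x)) * s + ((inverse s / 2) * (-(2*x))) * (4 - x^2)) (at x)"
    using DERIV_mult[OF d1 d2] unfolding s_def .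
  have d5: "((\<lambda>x. x^k * ((4 - x^2) * sqrt (4 - x^2))) has_real_derivative
     (real k * x^(k - Suc 0)) * ((4 - x^2) * s) + ((-(2*x)) * s + ((inverse s / 2) * (-(2*x))) * (4 - x^2)) * x^k) (at x)"
    using DERIV_mult[OF DERIV_pow d3] unfolding s_def .
  have eq: "(real k * x^(k - Suc 0)) * ((4 - x^2) * s) + ((-(2*x)) * s + ((inverse s / 2) * (-(2*x))) * (4 - x^2)) * x^k
     = 4 * real k * x^(k-1) * s - (real k + 3) * x^(k+1) * s"
  proof -
    have a: "((inverse s / 2) * (-(2*x))) * (4 - x^2) = - x * s"
    proof -
      have h: "4 - x^2 = s * s" using s2 by (simp add: power2_eq_square)
      have "((inverse s / 2) * (-(2*x))) * (s * s) = - x * s" using s2(2) by (simp add: field_simps)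
      then show ?thesis unfolding h .
    qed
    have b: "real k * x^(k - Suc 0) * x^2 = real k * x^(k+1)"
      by (cases k) (auto simp: power2_eq_square)
    have "(real k * x^(k - Suc 0)) * ((4 - x^2) * s) = 4 * real k * x^(k-1) * s - real k * x^(k - Suc 0) * x^2 * s"
      by (simp add: algebra_simps)
    then show ?thesis unfolding a using b by (simp add: algebra_simps) metis
  qed
  show ?thesis using DERIV_cong[OF d5 eq] unfolding s_def .
qed

definition Ji :: "nat \<Rightarrow> real" where
  "Ji k = integral {-2..2} (\<lambda>x. x^k * sqrt (4 - x^2))"

lemma Ji_has: "((\<lambda>x. x^k * sqrt (4 - x^2)) has_integral Ji k) {-2..2}"
  unfolding Ji_def by (intro integrable_integral integrable_continuous_interval continuous_intros)

lemma Ji_rec: "4 * real k * Ji (k-1) - (real k + 3) * Ji (k+1) = 0"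
proof -
  define G where "G x = x^k * ((4 - x^2) * sqrt (4 - x^2))" for x :: real
  define g where "g x = 4 * real k * x^(k-1) * sqrt (4 - x^2) - (real k + 3) * x^(k+1) * sqrt (4 - x^2)" for x :: real
  have "(g has_integral (G 2 - G (-2))) {-2..2}"
  proof (rule fundamental_theorem_of_calculus_interior)
    show "continuous_on {-2..2} G" unfolding G_def by (intro continuous_intros)
    fix x :: real assume "x \<in> {-2<..<2}"
    then have "(G has_real_derivative g x) (at x)" unfolding G_def g_def using deriv_G by auto
    then show "(G has_vector_derivative g x) (at x)" using has_real_derivative_iff_has_vector_derivative by blast
  qed simp
  then have h1: "(g has_integral 0) {-2..2}" unfolding G_def by simp
  have h2: "(g has_integral (4 * real k * Ji (k-1) - (real k + 3) * Ji (k+1))) {-2..2}"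
  proof -
    have "((\<lambda>x. (4 * real k) *\<^sub>R (x^(k-1) * sqrt (4 - x^2)) - (real k + 3) *\<^sub>R (x^(k+1) * sqrt (4 - x^2)))
        has_integral ((4 * real k) *\<^sub>R Ji (k-1) - (real k + 3) *\<^sub>R Ji (k+1))) {-2..2}"
      by (intro has_integral_diff has_integral_cmul Ji_has)
    moreover have "(\<lambda>x. (4 * real k) *\<^sub>R (x^(k-1) * sqrt (4 - x^2)) - (real k + 3) *\<^sub>R (x^(k+1) * sqrt (4 - x^2))) = g"
      unfolding g_def by (rule ext) (simp add: algebra_simps)
    ultimately show ?thesis by simp
  qed
  show ?thesis using has_integral_unique[OF h1 h2] by simp
qed

lemma deriv_F:
  fixes x :: real
  assumes "-2 < x" "x < 2"
  shows "((\<lambda>x. (x * sqrt (4 - x^2) + 4 * arcsin (x/2)) / 2) has_real_derivative sqrt (4 - x^2)) (at x)"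
proof -
  have pos: "4 - x^2 > 0"
  proof -
    have "(2 - x) * (2 + x) > 0" using assms by (intro mult_pos_pos) auto
    then show ?thesis by (simp add: power2_eq_square algebra_simps)
  qed
  define s where "s = sqrt (4 - x^2)"
  have s2: "4 - x^2 = s * s" "s > 0" unfolding s_def using pos by (auto simp: power2_eq_square[symmetric])
  have d1: "((\<lambda>x. 4 - x^2) has_real_derivative (-(2*x))) (at x)"
    by (auto intro!: derivative_eq_intros)
  have d2: "((\<lambda>x. sqrt (4 - x^2)) has_real_derivative (inverse s / 2) * (-(2*x))) (at x)"
    unfolding s_def by (rule DERIV_chain'[OF d1 DERIV_real_sqrt[OF pos]])
  have d3: "((\<lambda>x. x * sqrt (4 - x^2)) has_real_derivative 1 * s + ((inverse s / 2) * (-(2*x))) * x) (at x)"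
    using DERIV_mult[OF DERIV_ident d2] unfolding s_def .
  have dh: "((\<lambda>x. x / 2) has_real_derivative 1/2) (at x)" by (auto intro!: derivative_eq_intros)
  have as: "-1 < x/2" "x/2 < 1" using assms by auto
  have d4: "((\<lambda>x. arcsin (x/2)) has_real_derivative inverse (sqrt (1 - (x/2)^2)) * (1/2)) (at x)"
    by (rule DERIV_chain'[OF dh DERIV_arcsin[OF as]])
  have sq: "sqrt (1 - (x/2)^2) = s / 2"
  proof -
    have e1: "sqrt (1 - (x/2)^2) = sqrt ((4 - x^2)/4)"
      by (rule arg_cong[where f=sqrt]) (simp add: field_simps power2_eq_square)
    have e2: "sqrt ((4 - x^2)/4) = sqrt (4 - x^2) / sqrt 4" by (rule real_sqrt_divide)
    have e3: "sqrt (4::real) = 2" using real_sqrt_abs[of 2] by simp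
    show ?thesis unfolding e1 e2 e3 s_def ..
  qed
  have d5: "((\<lambda>x. (x * sqrt (4 - x^2) + 4 * arcsin (x/2)) / 2) has_real_derivative
      ((1 * s + ((inverse s / 2) * (-(2*x))) * x) + 4 * (inverse (s/2) * (1/2))) / 2) (at x)"
    using DERIV_cdivide[OF DERIV_add[OF d3 DERIV_cmult[OF d4, of 4]], of 2] unfolding sq .
  have eq: "((1 * s + ((inverse s / 2) * (-(2*x))) * x) + 4 * (inverse (s/2) * (1/2))) / 2 = s"
  proof -
    have "((1 * s + ((inverse s / 2) * (-(2*x))) * x) + 4 * (inverse (s/2) * (1/2))) / 2 = (s * s + (4 - x^2)) / (2 * s)"
      using s2(2) by (simp add: field_simps power2_eq_square)
    also have "\<dots> = s" unfolding s2(1) using s2(2) by (simp add: field_simps)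
    finally show ?thesis .
  qed
  show ?thesis using DERIV_cong[OF d5 eq] unfolding s_def .
qed

lemma Ji_0: "Ji 0 = 2 * pi"
proof -
  define F where "F x = (x * sqrt (4 - x^2) + 4 * arcsin (x/2)) / 2" for x :: real
  have "((\<lambda>x. sqrt (4 - x^2)) has_integral (F 2 - F (-2))) {-2..2}"
  proof (rule fundamental_theorem_of_calculus_interior)
    show "continuous_on {-2..2} F" unfolding F_def by (auto intro!: continuous_intros)
    fix x :: real assume "x \<in> {-2<..<2}"
    then have "(F has_real_derivative sqrt (4 - x^2)) (at x)" unfolding F_def using deriv_F by auto
    then show "(F has_vector_derivative sqrt (4 - x^2)) (at x)" using has_real_derivative_iff_has_vector_derivative by blast
  qed simp
  moreover have "F 2 - F (-2) = 2 * pi" unfolding F_def by simp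
  ultimately have "((\<lambda>x. sqrt (4 - x^2)) has_integral 2 * pi) {-2..2}" by simp
  moreover have "((\<lambda>x. sqrt (4 - x^2)) has_integral Ji 0) {-2..2}" using Ji_has[of 0] by simp
  ultimately show ?thesis using has_integral_unique by blast
qed


lemma binom_cat: "(2*j+2 choose (j+1)) * (j+1) = 2 * (2*j+1) * (2*j choose j)"
proof -
  have a: "Suc (2*j+1) * ((2*j+1) choose j) = (Suc (2*j+1) choose Suc j) * Suc j"
    by (rule Suc_times_binomial_eq)
  have b: "Suc (2*j) * ((2*j) choose j) = (Suc (2*j) choose Suc j) * Suc j"
    by (rule Suc_times_binomial_eq)
  have c: "(2*j+1 choose j) = (2*j+1 choose (j+1))"
    using binomial_symmetric[of j "2*j+1"] by simp
  have "(2*j+2 choose (j+1)) * (j+1) = (2*j+2) * (2*j+1 choose j)" using a by simp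
  also have "\<dots> = 2 * ((2*j+1 choose (j+1)) * (j+1))" using c by simp
  also have "\<dots> = 2 * ((2*j+1) * (2*j choose j))" using b by simp
  finally show ?thesis by simp
qed

lemma H_rec0: "real (H (k+2) 0) * (real k + 4) = 4 * (real k + 1) * real (H k 0)"
proof (cases "even k")
  case False then show ?thesis using H_odd0[of k] H_odd0[of "k+2"] by simp
next
  case True
  then obtain j where k: "k = 2*j" by blast
  have h1: "real (H (2*j) 0) = real (2*j choose j) / real (j+1)" by (rule H_catalan)
  have h2: "real (H (2*(j+1)) 0) = real (2*(j+1) choose (j+1)) / real (j+1+1)" by (rule H_catalan)
  have bc: "real (2*(j+1) choose (j+1)) * (real j + 1) = 2 * (2 * real j + 1) * real (2*j choose j)"
  proof -
    have "real ((2*j+2 choose (j+1)) * (j+1)) = real (2 * (2*j+1) * (2*j choose j))"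
      using binom_cat[of j] by (simp only:)
    moreover have "2*(j+1) = 2*j+2" by simp
    ultimately show ?thesis by (simp del: binomial_Suc_Suc add: algebra_simps)
  qed
  have gen: "b1 / real (j+1+1) * (real (2*j) + 4) = 4 * (real (2*j) + 1) * (b0 / real (j+1))"
    if "b1 * (real j + 1) = 2 * (2 * real j + 1) * b0" for b1 b0 :: real
  proof -
    have "b1 / real (j+1+1) * (real (2*j) + 4) = 2 * b1" by (simp add: field_simps)
    also have "\<dots> = 4 * (real (2*j) + 1) * (b0 / real (j+1))" using that by (simp add: field_simps)
    finally show ?thesis .
  qed
  have e: "k + 2 = 2*(j+1)" using k by simp
  show ?thesis unfolding e unfolding h2 k h1 by (rule gen[OF bc])
qed

lemma Ji_1: "Ji 1 = 0"
  using Ji_rec[of 0] by simp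

lemma Ji_H: "Ji k = 2 * pi * real (H k 0)"
proof (induction k rule: less_induct)
  case (less k)
  show ?case
  proof (cases k)
    case 0 then show ?thesis using Ji_0 by simp
  next
    case (Suc k1)
    show ?thesis
    proof (cases k1)
      case 0 then show ?thesis using Ji_1 Suc by simp
    next
      case (Suc k2)
      have kk: "k = k2 + 2" using Suc \<open>k = Suc k1\<close> by simp
      have r: "4 * real (k2+1) * Ji k2 - (real (k2+1) + 3) * Ji (k2+2) = 0"
        using Ji_rec[of "k2+1"] by simp
      have ih: "Ji k2 = 2 * pi * real (H k2 0)" using less kk by simp
      have "Ji (k2+2) * (real k2 + 4) = 4 * (real k2 + 1) * Ji k2" using r by (simp add: algebra_simps)
      then have "Ji (k2+2) * (real k2 + 4) = (2 * pi * real (H (k2+2) 0)) * (real k2 + 4)"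
        unfolding ih using H_rec0[of k2] by (simp add: algebra_simps)
      moreover have ne: "real k2 + 4 \<noteq> 0" by simp
      ultimately have "Ji (k2+2) = 2 * pi * real (H (k2+2) 0)" using mult_right_cancel[OF ne] by blast
      then show ?thesis unfolding kk .
    qed
  qed
qed

lemma semicircle_moment:
  "integral {-2..2::real} (\<lambda>x. x ^ k * sqrt (4 - x\<^sup>2) / (2 * pi)) = real (H k 0)"
proof -
  have "((\<lambda>x. (1 / (2*pi)) *\<^sub>R (x ^ k * sqrt (4 - x\<^sup>2))) has_integral (1 / (2*pi)) *\<^sub>R Ji k) {-2..2}"
    by (intro has_integral_cmul Ji_has)
  then have "((\<lambda>x. x ^ k * sqrt (4 - x\<^sup>2) / (2 * pi)) has_integral real (H k 0)) {-2..2}"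
    unfolding Ji_H by simp
  then show ?thesis by (rule integral_unique)
qed


context
  fixes smul :: "complex \<Rightarrow> 'a::{real_normed_algebra_1,banach} \<Rightarrow> 'a"
    and star :: "'a \<Rightarrow> 'a" and tau :: "'a \<Rightarrow> complex"
  assumes cs: "cstar_tracial_space smul star tau"
begin

lemma smul_real: "smul (complex_of_real r) x = r *\<^sub>R x" using cs unfolding cstar_tracial_space_def by simp

lemma smul_neg1: "smul (-1) x = - x"
  using smul_real[of "-1" x] by simp

lemma tau_add: "tau (x + y) = tau x + tau y" using cs unfolding cstar_tracial_space_def by simp
lemma tau_smul: "tau (smul c x) = c * tau x" using cs unfolding cstar_tracial_space_def by simp
lemma tau_one: "tau 1 = 1" using cs unfolding cstar_tracial_space_def by simp

lemma tau_zero: "tau 0 = 0"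
  using tau_add[of 0 0] by simp

lemma tau_neg: "tau (- x) = - tau x"
  using tau_smul[of "-1" x] smul_neg1 by simp

lemma tau_diff: "tau (x - y) = tau x - tau y"
  using tau_add[of x "-y"] tau_neg[of y] by simp

lemma tau_sum: "tau (\<Sum>i\<in>I. f i) = (\<Sum>i\<in>I. tau (f i))"
  by (induction I rule: infinite_finite_induct) (auto simp: tau_zero tau_add)

lemma tau_of_nat_mult: "tau (of_nat n * x) = of_nat n * tau x"
proof -
  have "of_nat n * x = smul (complex_of_real (real n)) x"
    using smul_real[of "real n" x] by (simp add: scaleR_conv_of_real)
  then show ?thesis using tau_smul by simp
qed

lemma smul_add2: "smul c (x + y) = smul c x + smul c y" using cs unfolding cstar_tracial_space_def by simp

lemma smul_zero2: "smul c 0 = 0"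
  using smul_add2[of c 0 0] by simp

lemma smul_sum: "smul c (\<Sum>i\<in>I. f i) = (\<Sum>i\<in>I. smul c (f i))"
  by (induction I rule: infinite_finite_induct) (auto simp: smul_zero2 smul_add2)

lemma smul_mult_l: "smul c (x * y) = smul c x * y" using cs unfolding cstar_tracial_space_def by simp
lemma smul_mult_r: "smul c (x * y) = x * smul c y" using cs unfolding cstar_tracial_space_def by (elim conjE) blast
lemma smul_smul: "smul (c * d) x = smul c (smul d x)" using cs unfolding cstar_tracial_space_def by simp

lemma smul_mult_mult: "smul c x * smul d y = smul (c * d) (x * y)"
proof -
  have "smul c x * smul d y = smul c (x * smul d y)" by (rule smul_mult_l[symmetric])
  also have "\<dots> = smul c (smul d (x * y))" by (simp add: smul_mult_r)
  also have "\<dots> = smul (c * d) (x * y)" by (rule smul_smul[symmetric])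
  finally show ?thesis .
qed

lemma star_add: "star (x + y) = star x + star y" using cs unfolding cstar_tracial_space_def by simp
lemma star_smul: "star (smul c x) = smul (cnj c) (star x)" using cs unfolding cstar_tracial_space_def by simp
lemma star_mult: "star (x * y) = star y * star x" using cs unfolding cstar_tracial_space_def by simp
lemma star_star: "star (star x) = x" using cs unfolding cstar_tracial_space_def by simp

lemma star_zero: "star 0 = 0"
  using star_add[of 0 0] by simp

lemma star_sum: "star (\<Sum>i\<in>I. f i) = (\<Sum>i\<in>I. star (f i))"
  by (induction I rule: infinite_finite_induct) (auto simp: star_zero star_add)

lemma star_one: "star 1 = 1"
proof -
  have "star (star 1 * 1) = star 1 * star (star 1)" by (rule star_mult)
  then have "star (star 1) = star 1 * star (star 1)" by simp
  then have "1 = star 1 * 1" unfolding star_star .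
  then show ?thesis by simp
qed

lemma star_pow_comm: "star (x ^ n) = star x ^ n"
proof (induction n)
  case 0 then show ?case using star_one by simp
next
  case (Suc n)
  have "star (x ^ Suc n) = star (x ^ n * x)" by (simp add: power_commutes)
  also have "\<dots> = star x * star (x ^ n)" by (rule star_mult)
  finally show ?case using Suc by simp
qed

lemma tau_pos: "Re (tau (star x * x)) \<ge> 0"
proof -
  have "\<forall>x. Im (tau (star x * x)) = 0 \<and> Re (tau (star x * x)) \<ge> 0" using cs unfolding cstar_tracial_space_def by (elim conjE)
  then show ?thesis by blast
qed

end


fun cheb :: "'b::ring_1 \<Rightarrow> nat \<Rightarrow> 'b" where
  "cheb s 0 = 1"
| "cheb s (Suc 0) = s"
| "cheb s (Suc (Suc m)) = s * cheb s (Suc m) - cheb s m"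

lemma s_cheb: "s * cheb s m = cheb s (Suc m) + (if m = 0 then 0 else cheb s (m - 1))"
  by (cases m) auto

lemma pow_cheb: "s ^ k = (\<Sum>m\<le>k. of_nat (H k m) * cheb s m)"
proof (induction k)
  case 0 then show ?case by simp
next
  case (Suc k)
  define h where "h m = (of_nat (H k m) :: 'a)" for m
  define c where "c m = cheb s m" for m
  have "s ^ Suc k = s * s ^ k" by simp
  also have "\<dots> = (\<Sum>m\<le>k. h m * (s * c m))"
    unfolding Suc h_def c_def sum_distrib_left by (intro sum.cong refl) (metis mult.assoc mult_of_nat_commute)
  also have "\<dots> = (\<Sum>m\<le>k. h m * c (Suc m) + (if m = 0 then 0 else h m * c (m - 1)))"
    unfolding c_def s_cheb by (intro sum.cong refl) (simp add: distrib_left)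
  also have "\<dots> = (\<Sum>m\<le>k. h m * c (Suc m)) + (\<Sum>m\<le>k. (if m = 0 then 0 else h m * c (m - 1)))"
    by (rule sum.distrib)
  finally have L: "s ^ Suc k = (\<Sum>m\<le>k. h m * c (Suc m)) + (\<Sum>m\<le>k. (if m = 0 then 0 else h m * c (m - 1)))" .
  have R: "(\<Sum>m\<le>Suc k. of_nat (H (Suc k) m) * cheb s m) =
      (\<Sum>m\<le>Suc k. (if m = 0 then 0 else h (m - 1) * c m)) + (\<Sum>m\<le>Suc k. h (Suc m) * c m)"
  proof -
    have "(\<Sum>m\<le>Suc k. of_nat (H (Suc k) m) * cheb s m) =
      (\<Sum>m\<le>Suc k. (if m = 0 then 0 else h (m - 1) * c m) + h (Suc m) * c m)"
      unfolding h_def c_def by (intro sum.cong refl) (simp add: distrib_right)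
    then show ?thesis by (simp only: sum.distrib)
  qed
  have A: "(\<Sum>m\<le>Suc k. (if m = 0 then 0 else h (m - 1) * c m)) = (\<Sum>m\<le>k. h m * c (Suc m))"
    unfolding sum.atMost_Suc_shift by simp
  have B: "(\<Sum>m\<le>Suc k. h (Suc m) * c m) = (\<Sum>m\<le>k. (if m = 0 then 0 else h m * c (m - 1)))"
  proof (cases k)
    case 0 then show ?thesis unfolding h_def by (simp add: H_gt)
  next
    case (Suc k')
    have z1: "h (Suc (Suc k')) = 0" "h (Suc (Suc (Suc k'))) = 0" unfolding h_def Suc by (simp_all add: H_gt)
    have "(\<Sum>m\<le>Suc k. h (Suc m) * c m) = (\<Sum>m\<le>k'. h (Suc m) * c m)"
      unfolding Suc using z1 by simp
    also have "\<dots> = (\<Sum>m\<le>k. (if m = 0 then 0 else h m * c (m - 1)))"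
      unfolding Suc sum.atMost_Suc_shift by simp
    finally show ?thesis .
  qed
  show ?case unfolding L R A B ..
qed

context
  fixes smul :: "complex \<Rightarrow> 'a::{real_normed_algebra_1,banach} \<Rightarrow> 'a"
    and star :: "'a \<Rightarrow> 'a" and tau :: "'a \<Rightarrow> complex"
  assumes cs: "cstar_tracial_space smul star tau"
begin

lemma cheb_in: "cheb s m \<in> gen_star_alg smul star s"
proof (induction s m rule: cheb.induct)
  case (1 s) then show ?case by (simp add: gen_star_alg.one)
next
  case (2 s) then show ?case by (simp add: gen_star_alg.gen)
next
  case (3 s m)
  have n1: "smul (-1) (cheb s m) = - cheb s m" by (rule smul_neg1[OF cs])
  have eq: "s * cheb s (Suc m) - cheb s m = s * cheb s (Suc m) + smul (-1) (cheb s m)"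
    unfolding n1 by simp
  have mem: "s * cheb s (Suc m) + smul (-1) (cheb s m) \<in> gen_star_alg smul star s"
    using 3 by (intro gen_star_alg.add gen_star_alg.mult gen_star_alg.scale gen_star_alg.gen)
  show ?case unfolding cheb.simps(3) eq by (rule mem)
qed

lemma tau_pow_sc:
  assumes "semicircle_var star tau s"
  shows "tau (s ^ k) = of_nat (H k 0)"
  using assms unfolding semicircle_var_def semicircle_moment by simp

lemma tau_cheb:
  assumes sc: "semicircle_var star tau s"
  shows "m \<ge> 1 \<Longrightarrow> tau (cheb s m) = 0"
proof (induction m rule: less_induct)
  case (less m)
  then obtain m' where m: "m = Suc m'" by (cases m) auto
  define f where "f j = of_nat (H m j) * tau (cheb s j)" for j
  have "tau (s ^ m) = (\<Sum>j\<le>m. f j)"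
    unfolding f_def by (simp add: pow_cheb[of s m] tau_sum[OF cs] tau_of_nat_mult[OF cs])
  also have "\<dots> = (\<Sum>j\<le>m'. f j) + f m" unfolding m by simp
  also have "(\<Sum>j\<le>m'. f j) = f 0 + (\<Sum>j\<in>{..m'} - {0}. f j)"
    by (simp add: sum.remove)
  also have "(\<Sum>j\<in>{..m'} - {0}. f j) = 0"
  proof (rule sum.neutral, intro ballI)
    fix j assume "j \<in> {..m'} - {0}"
    then have "j \<ge> 1" "j < m" using m by auto
    then show "f j = 0" unfolding f_def using less.IH by simp
  qed
  finally have "tau (s ^ m) = f 0 + f m" by simp
  moreover have "f 0 = of_nat (H m 0)" unfolding f_def using tau_one[OF cs] by simp
  moreover have "f m = tau (cheb s m)" unfolding f_def by (simp add: H_diag)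
  ultimately show ?case using tau_pow_sc[OF sc, of m] by simp
qed

end


definition phit :: "('a::ring_1 \<Rightarrow> complex) \<Rightarrow> (nat \<Rightarrow> 'a) \<Rightarrow> (nat \<times> nat) list \<Rightarrow> complex" where
  "phit tau s w = tau (prod_list (map (\<lambda>(x,m). cheb (s x) m) w))"

lemma simple_symirr: "simple_graph L E \<Longrightarrow> symirr E"
  unfolding simple_graph_def symirr_def by (intro conjI allI impI) (elim conjE; blast)+

lemma map_nth_fun: "map (\<lambda>j. f (w ! j)) [0..<length w] = map f w"
proof -
  have "map (\<lambda>j. f (w ! j)) [0..<length w] = map f (map (nth w) [0..<length w])" by (simp add: comp_def)
  then show ?thesis by (simp only: map_nth)
qed

context
  fixes smul :: "complex \<Rightarrow> 'a::{real_normed_algebra_1,banach} \<Rightarrow> 'a"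
    and star :: "'a \<Rightarrow> 'a" and tau :: "'a \<Rightarrow> complex"
    and L :: nat and E :: "nat \<Rightarrow> nat \<Rightarrow> bool" and s :: "nat \<Rightarrow> 'a"
  assumes cs: "cstar_tracial_space smul star tau"
    and sg: "simple_graph L E"
    and sc: "\<forall>i\<in>{1..L}. semicircle_var star tau (s i)"
    and gi: "G_independent L E tau (\<lambda>i. gen_star_alg smul star (s i))"
begin

lemma gi_comm:
  assumes "x \<in> {1..L}" "y \<in> {1..L}" "E x y"
  shows "cheb (s x) a * cheb (s y) b = cheb (s y) b * cheb (s x) a"
proof -
  have G1: "\<forall>i\<in>{1..L}. \<forall>j\<in>{1..L}. E i j \<longrightarrow>
        (\<forall>a\<in>gen_star_alg smul star (s i). \<forall>b\<in>gen_star_alg smul star (s j). a * b = b * a \<and> tau (a * b) = tau a * tau b)"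
    using gi unfolding G_independent_def by (rule conjunct1)
  show ?thesis using G1[rule_format, OF assms cheb_in[OF cs, of "s x" a] cheb_in[OF cs, of "s y" b]] by simp
qed

lemma good_phit: "good L E (phit tau s)"
  unfolding good_def
proof (intro conjI allI impI)
  show "phit tau s [] = 1" unfolding phit_def using tau_one[OF cs] by simp
next
  fix A x B
  show "phit tau s (A @ (x,0) # B) = phit tau s (A @ B)" unfolding phit_def by simp
next
  fix A x a y b B
  assume ok: "okw L (A @ (x,a) # (y,b) # B)" and e: "E x y"
  have xy: "x \<in> {1..L}" "y \<in> {1..L}" using ok by (auto simp: okw_app okw_Cons)
  have c: "cheb (s x) a * (cheb (s y) b * P) = cheb (s y) b * (cheb (s x) a * P)" for P
    using gi_comm[OF xy e, of a b] by (metis mult.assoc)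
  show "phit tau s (A @ (x,a) # (y,b) # B) = phit tau s (A @ (y,b) # (x,a) # B)"
    unfolding phit_def using c by simp
next
  fix A x m B
  define P where "P = prod_list (map (\<lambda>(x,m). cheb (s x) m) A)"
  define Q where "Q = prod_list (map (\<lambda>(x,m). cheb (s x) m) B)"
  have "phit tau s (A @ (x,1) # (x,m) # B) = tau (P * ((s x * cheb (s x) m) * Q))"
    unfolding phit_def P_def Q_def by (simp add: mult.assoc)
  also have "\<dots> = tau (P * (cheb (s x) (Suc m) * Q)) + (if m = 0 then 0 else tau (P * (cheb (s x) (m-1) * Q)))"
    unfolding s_cheb by (cases "m = 0") (auto simp: distrib_left distrib_right tau_add[OF cs] tau_zero[OF cs])
  also have "\<dots> = phit tau s (A @ (x,Suc m) # B) + (if m = 0 then 0 else phit tau s (A @ (x,m-1) # B))"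
    unfolding phit_def P_def Q_def by simp
  finally show "phit tau s (A @ (x,1) # (x,m) # B) = phit tau s (A @ (x,Suc m) # B) + (if m = 0 then 0 else phit tau s (A @ (x,m-1) # B))" .
next
  fix w :: "(nat \<times> nat) list"
  assume ok: "okw L w" and ne: "w \<noteq> []" and m1: "\<forall>l\<in>set w. snd l \<ge> 1" and nr: "\<not> nonred E w"
  define idx where "idx j = fst (w ! j)" for j
  define a where "a j = cheb (s (idx j)) (snd (w ! j))" for j
  have G2: "\<forall>k::nat. \<forall>idx::nat \<Rightarrow> nat. \<forall>a::nat \<Rightarrow> 'a.
        k \<ge> 1 \<longrightarrow> (\<forall>j<k. idx j \<in> {1..L}) \<longrightarrow>
        (\<forall>j1 j2. j1 < j2 \<and> j2 < k \<and> idx j1 = idx j2 \<longrightarrow>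
           (\<exists>j3. j1 < j3 \<and> j3 < j2 \<and> \<not> E (idx j1) (idx j3))) \<longrightarrow>
        (\<forall>j<k. a j \<in> gen_star_alg smul star (s (idx j)) \<and> tau (a j) = 0) \<longrightarrow>
        tau (prod_list (map a [0..<k])) = 0"
    using gi unfolding G_independent_def by (rule conjunct2)
  have h1: "length w \<ge> 1" using ne by (cases w) auto
  have h2: "\<forall>j<length w. idx j \<in> {1..L}"
  proof (intro allI impI)
    fix j assume "j < length w"
    then have "w ! j \<in> set w" by simp
    then show "idx j \<in> {1..L}" using ok unfolding okw_def idx_def by blast
  qed
  have h3: "\<forall>j1 j2. j1 < j2 \<and> j2 < length w \<and> idx j1 = idx j2 \<longrightarrow>
           (\<exists>j3. j1 < j3 \<and> j3 < j2 \<and> \<not> E (idx j1) (idx j3))"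
    using red_idx_if[OF nr] unfolding red_idx_def idx_def by blast
  have h4: "\<forall>j<length w. a j \<in> gen_star_alg smul star (s (idx j)) \<and> tau (a j) = 0"
  proof (intro allI impI conjI)
    fix j assume j: "j < length w"
    show "a j \<in> gen_star_alg smul star (s (idx j))" unfolding a_def by (rule cheb_in[OF cs])
    have "snd (w ! j) \<ge> 1" using m1 j by auto
    moreover have "semicircle_var star tau (s (idx j))" using sc h2 j by auto
    ultimately show "tau (a j) = 0" unfolding a_def using tau_cheb[OF cs] by blast
  qed
  have "tau (prod_list (map a [0..<length w])) = 0" using spec[OF spec[OF spec[OF G2, of "length w"], of idx], of a] h1 h2 h3 h4 by blast
  moreover have "map a [0..<length w] = map (\<lambda>(x,m). cheb (s x) m) w"
    unfolding a_def idx_def using map_nth_fun[of "\<lambda>l. cheb (s (fst l)) (snd l)" w]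
    by (simp add: case_prod_beta)
  ultimately show "phit tau s w = 0" unfolding phit_def by simp
qed

lemma tau_word: "set xs \<subseteq> {1..L} \<Longrightarrow>
    tau (prod_list (map s xs)) = of_nat (cntp E (rev (map (\<lambda>i. (i, 1::nat)) xs)) [])"
proof -
  assume xs: "set xs \<subseteq> {1..L}"
  have ok: "okw L (map (\<lambda>i. (i, 1::nat)) xs)" using xs unfolding okw_def by auto
  have "phit tau s (map (\<lambda>i. (i, 1::nat)) xs) = phic E (map (\<lambda>i. (i, 1::nat)) xs)"
    using uniq[OF good_phit good_phic[OF simple_symirr[OF sg]] simple_symirr[OF sg] ok] .
  moreover have "phit tau s (map (\<lambda>i. (i, 1::nat)) xs) = tau (prod_list (map s xs))"
    unfolding phit_def by (simp add: comp_def)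
  ultimately show ?thesis unfolding phic_def by simp
qed

end


definition lst :: "nat \<Rightarrow> nat \<Rightarrow> nat list set" where
  "lst L n = {xs. set xs \<subseteq> {1..L} \<and> length xs = n}"

lemma finite_lst: "finite (lst L n)"
  unfolding lst_def by (rule finite_lists_length_eq) simp

lemma lst_Suc: "lst L (Suc n) = (\<lambda>(y,xs). y # xs) ` ({1..L} \<times> lst L n)"
  unfolding lst_def by (auto simp: length_Suc_conv image_iff)

lemma sum_lst_Suc:
  "(\<Sum>xs\<in>lst L (Suc n). f xs) = (\<Sum>y\<in>{1..L}. \<Sum>xs\<in>lst L n. f (y # xs))"
proof -
  have inj: "inj_on (\<lambda>(y,xs). y # xs) ({1..L} \<times> lst L n)" by (auto simp: inj_on_def)
  have "(\<Sum>xs\<in>lst L (Suc n). f xs) = (\<Sum>p\<in>{1..L} \<times> lst L n. f ((\<lambda>(y,xs). y # xs) p))"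
    unfolding lst_Suc by (rule sum.reindex[OF inj, unfolded comp_def])
  also have "\<dots> = (\<Sum>p\<in>{1..L} \<times> lst L n. (\<lambda>(y,xs). f (y # xs)) p)"
    by (intro sum.cong refl) (auto split: prod.split)
  also have "\<dots> = (\<Sum>y\<in>{1..L}. \<Sum>xs\<in>lst L n. f (y # xs))"
    by (rule sum.cartesian_product[symmetric])
  finally show ?thesis .
qed

fun Gw :: "nat \<Rightarrow> (nat \<Rightarrow> nat \<Rightarrow> bool) \<Rightarrow> (nat \<Rightarrow> real) \<Rightarrow> nat \<Rightarrow> nat list \<Rightarrow> real" where
  "Gw L E a 0 r = (if r = [] then 1 else 0)"
| "Gw L E a (Suc n) r = (\<Sum>y\<in>{1..L}. a y * (Gw L E a n (y # r) +
      (case popx E y r of None \<Rightarrow> 0 | Some r' \<Rightarrow> Gw L E a n r')))"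

lemma cntp_one_letter:
  "cntp E ((y,1) # ws) r = cntp E ws (y # r) + (case popx E y r of None \<Rightarrow> 0 | Some r' \<Rightarrow> cntp E ws r')"
  by (simp add: atMost_Suc split: option.split)

lemma sum_lst_Gw:
  "(\<Sum>xs\<in>lst L n. prod_list (map a xs) * real (cntp E (map (\<lambda>i. (i, 1::nat)) xs) r)) = Gw L E a n r"
proof (induction n arbitrary: r)
  case 0
  have "lst L 0 = {[]}" unfolding lst_def by auto
  then show ?case by simp
next
  case (Suc n)
  have "(\<Sum>xs\<in>lst L (Suc n). prod_list (map a xs) * real (cntp E (map (\<lambda>i. (i, 1::nat)) xs) r)) =
     (\<Sum>y\<in>{1..L}. \<Sum>xs\<in>lst L n. a y * (prod_list (map a xs) * real (cntp E (map (\<lambda>i. (i, 1::nat)) xs) (y # r))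
        + (case popx E y r of None \<Rightarrow> 0 | Some r' \<Rightarrow> prod_list (map a xs) * real (cntp E (map (\<lambda>i. (i, 1::nat)) xs) r'))))"
    unfolding sum_lst_Suc by (intro sum.cong refl) (simp add: cntp_one_letter algebra_simps split: option.split)
  also have "\<dots> = (\<Sum>y\<in>{1..L}. a y * (Gw L E a n (y # r) +
      (case popx E y r of None \<Rightarrow> 0 | Some r' \<Rightarrow> Gw L E a n r')))"
  proof (intro sum.cong refl)
    fix y
    show "(\<Sum>xs\<in>lst L n. a y * (prod_list (map a xs) * real (cntp E (map (\<lambda>i. (i, 1::nat)) xs) (y # r))
        + (case popx E y r of None \<Rightarrow> 0 | Some r' \<Rightarrow> prod_list (map a xs) * real (cntp E (map (\<lambda>i. (i, 1::nat)) xs) r')))) =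
        a y * (Gw L E a n (y # r) + (case popx E y r of None \<Rightarrow> 0 | Some r' \<Rightarrow> Gw L E a n r'))"
      unfolding Suc.IH[symmetric] by (simp add: sum_distrib_left sum.distrib distrib_left split: option.split)
  qed
  finally show ?case by simp
qed

lemma popx_length: "popx E y r = Some r' \<Longrightarrow> length r = Suc (length r')"
  by (induction E y r arbitrary: r' rule: popx.induct) (auto split: if_splits)

lemma Gw_zero: "length r > n \<Longrightarrow> Gw L E a n r = 0"
proof (induction n arbitrary: r)
  case 0 then show ?case by auto
next
  case (Suc n)
  have "Gw L E a n (y # r) = 0" for y using Suc by auto
  moreover have "(case popx E y r of None \<Rightarrow> 0 | Some r' \<Rightarrow> Gw L E a n r') = 0" for y
  proof (cases "popx E y r")
    case (Some r')
    have "length r' = length r - 1" using popx_length[OF Some] by simp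
    then show ?thesis using Some Suc by simp
  qed simp
  ultimately show ?case by simp
qed

lemma popx_set: "popx E y r = Some r' \<Longrightarrow> set r' \<subseteq> set r \<and> y \<in> set r"
  by (induction E y r arbitrary: r' rule: popx.induct) (auto split: if_splits)

lemma popx_prod: "popx E y r = Some r' \<Longrightarrow> prod_list (map f r) = f y * prod_list (map (f::nat \<Rightarrow> real) r')"
  by (induction E y r arbitrary: r' rule: popx.induct) (auto split: if_splits)

definition Acc :: "nat \<Rightarrow> (nat \<Rightarrow> nat \<Rightarrow> bool) \<Rightarrow> nat list \<Rightarrow> nat set" where
  "Acc L E r = {y \<in> {1..L}. popx E y r \<noteq> None}"

lemma Acc_clique: "symirr E \<Longrightarrow> popx E y1 r \<noteq> None \<Longrightarrow> popx E y2 r \<noteq> None \<Longrightarrow> y1 \<noteq> y2 \<Longrightarrow> E y1 y2"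
proof (induction r)
  case Nil then show ?case by simp
next
  case (Cons z r)
  show ?case
  proof (cases "z = y1")
    case True then show ?thesis using Cons.prems by (auto split: if_splits)
  next
    case f1: False
    show ?thesis
    proof (cases "z = y2")
      case True then show ?thesis using Cons.prems f1 unfolding symirr_def by (auto split: if_splits)
    next
      case False then show ?thesis using Cons f1 by (auto split: if_splits)
    qed
  qed
qed

lemma Acc_sub: "Acc L E r \<subseteq> set r"
  unfolding Acc_def using popx_set by fastforce


lemma prod_nonneg_cw:
  assumes "\<forall>y. a y \<ge> 0" "\<forall>y\<in>{1..L}. c y > (0::real)" "set r \<subseteq> {1..L}"
  shows "prod_list (map (\<lambda>u. c u * a u) r) \<ge> 0"
  using assms(3)
proof (induction r)
  case Nil then show ?case by simp
next
  case (Cons z r)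
  then have "c z > 0" using assms(2) by auto
  then show ?case using Cons assms(1) by (simp add: less_imp_le)
qed

lemma Gw_bound:
  fixes a c :: "nat \<Rightarrow> real" and R :: real
  assumes se: "symirr E"
    and a0: "\<forall>y. a y \<ge> 0"
    and c0: "\<forall>y\<in>{1..L}. c y > 0"
    and acc: "\<forall>r. set r \<subseteq> {1..L} \<longrightarrow> length r \<le> K \<longrightarrow> (\<forall>y\<in>Acc L E r. real (card (Acc L E r)) \<le> c y)"
    and R0: "R \<ge> 0" and R2: "R^2 = (\<Sum>y\<in>{1..L}. a y * (c y * a y))"
  shows "set r \<subseteq> {1..L} \<Longrightarrow> length r + n \<le> 2*K \<Longrightarrow>
    Gw L E a n r \<le> real (H n (length r)) * R^(n - length r) * prod_list (map (\<lambda>u. c u * a u) r)"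
proof (induction n arbitrary: r)
  case 0
  have "prod_list (map (\<lambda>u. c u * a u) r) \<ge> 0" using prod_nonneg_cw[OF a0 c0 0(1)] .
  then show ?case by (cases "r = []") auto
next
  case (Suc n)
  define h where "h = length r"
  define P where "P = prod_list (map (\<lambda>u. c u * a u) r)"
  have P0: "P \<ge> 0" unfolding P_def using prod_nonneg_cw[OF a0 c0 Suc.prems(1)] .
  have RHS0: "real (H (Suc n) h) * R^(Suc n - h) * P \<ge> 0" using P0 R0 by simp
  show ?case
  proof (cases "h > Suc n")
    case True
    then have "Gw L E a (Suc n) r = 0" using Gw_zero[of "Suc n" r L E a] h_def by simp
    then show ?thesis using RHS0 unfolding h_def P_def by simp
  next
    case False
    then have hK: "h \<le> K" using Suc.prems(2) unfolding h_def by simp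
    define X where "X = real (H n (h - 1)) * R^(Suc n - h) * P"
    have X0: "X \<ge> 0" unfolding X_def using P0 R0 by simp
    have T1: "(\<Sum>y\<in>{1..L}. a y * Gw L E a n (y # r)) \<le> real (H n (Suc h)) * R^(Suc n - h) * P"
    proof -
      have "(\<Sum>y\<in>{1..L}. a y * Gw L E a n (y # r)) \<le>
          (\<Sum>y\<in>{1..L}. a y * (real (H n (Suc h)) * R^(n - Suc h) * (c y * a y * P)))"
      proof (rule sum_mono)
        fix y assume y: "y \<in> {1..L}"
        have "Gw L E a n (y # r) \<le> real (H n (length (y # r))) * R^(n - length (y # r)) * prod_list (map (\<lambda>u. c u * a u) (y # r))"
          using Suc.IH[of "y # r"] Suc.prems y by simp
        then have "Gw L E a n (y # r) \<le> real (H n (Suc h)) * R^(n - Suc h) * (c y * a y * P)"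
          unfolding h_def P_def by simp
        then show "a y * Gw L E a n (y # r) \<le> a y * (real (H n (Suc h)) * R^(n - Suc h) * (c y * a y * P))"
          using a0 by (simp add: mult_left_mono)
      qed
      also have "\<dots> = real (H n (Suc h)) * R^(n - Suc h) * P * (\<Sum>y\<in>{1..L}. a y * (c y * a y))"
        by (simp add: sum_distrib_left sum_distrib_right algebra_simps)
      also have "\<dots> = real (H n (Suc h)) * (R^(n - Suc h) * R^2) * P" unfolding R2 by simp
      also have "\<dots> = real (H n (Suc h)) * R^(Suc n - h) * P"
      proof (cases "Suc h \<le> n")
        case True
        then have e: "Suc n - h = (n - Suc h) + 2" by simp
        have "R^(n - Suc h) * R^2 = R^(Suc n - h)" unfolding e by (simp add: power_add power2_eq_square)
        then show ?thesis by simp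
      next
        case False
        then show ?thesis using H_gt[of n "Suc h"] by simp
      qed
      finally show ?thesis .
    qed
    have T2: "(\<Sum>y\<in>{1..L}. a y * (case popx E y r of None \<Rightarrow> 0 | Some r' \<Rightarrow> Gw L E a n r'))
        \<le> (if h = 0 then 0 else X)"
    proof -
      have "(\<Sum>y\<in>{1..L}. a y * (case popx E y r of None \<Rightarrow> 0 | Some r' \<Rightarrow> Gw L E a n r'))
          \<le> (\<Sum>y\<in>{1..L}. if y \<in> Acc L E r then X / c y else 0)"
      proof (rule sum_mono)
        fix y assume y: "y \<in> {1..L}"
        show "a y * (case popx E y r of None \<Rightarrow> 0 | Some r' \<Rightarrow> Gw L E a n r') \<le> (if y \<in> Acc L E r then X / c y else 0)"
        proof (cases "popx E y r")
          case None then show ?thesis unfolding Acc_def by simp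
        next
          case (Some r')
          have yA: "y \<in> Acc L E r" unfolding Acc_def using y Some by simp
          have lr: "h = Suc (length r')" unfolding h_def using popx_length[OF Some] .
          have sr: "set r' \<subseteq> {1..L}" using popx_set[OF Some] Suc.prems(1) by blast
          have "Gw L E a n r' \<le> real (H n (length r')) * R^(n - length r') * prod_list (map (\<lambda>u. c u * a u) r')"
            using Suc.IH[OF sr] Suc.prems(2) lr h_def by simp
          moreover have "length r' = h - 1" "n - length r' = Suc n - h" using lr by auto
          ultimately have g: "Gw L E a n r' \<le> real (H n (h - 1)) * R^(Suc n - h) * prod_list (map (\<lambda>u. c u * a u) r')"
            by simp
          have pp: "P = c y * a y * prod_list (map (\<lambda>u. c u * a u) r')"
            unfolding P_def using popx_prod[OF Some, of "\<lambda>u. c u * a u"] by simp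
          have cy: "c y > 0" using c0 y by auto
          have "a y * Gw L E a n r' \<le> a y * (real (H n (h - 1)) * R^(Suc n - h) * prod_list (map (\<lambda>u. c u * a u) r'))"
            using g a0 by (simp add: mult_left_mono)
          also have "\<dots> = X / c y" unfolding X_def pp using cy by (simp add: field_simps)
          finally show ?thesis using Some yA by simp
        qed
      qed
      also have "\<dots> = (\<Sum>y\<in>Acc L E r. X / c y)"
      proof -
        have "Acc L E r \<subseteq> {1..L}" unfolding Acc_def by auto
        then have "{1..L} \<inter> Acc L E r = Acc L E r" by blast
        then show ?thesis using sum.inter_restrict[of "{1..L}" "\<lambda>y. X / c y" "Acc L E r"] by simp
      qed
      also have "\<dots> \<le> (if h = 0 then 0 else X)"
      proof (cases "Acc L E r = {}")
        case True then show ?thesis using X0 by simp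
      next
        case ne: False
        have fin: "finite (Acc L E r)" unfolding Acc_def by simp
        have hne: "h \<noteq> 0" using ne Acc_sub[of L E r] unfolding h_def by auto
        have cardp: "real (card (Acc L E r)) > 0" using ne fin by (simp add: card_gt_0_iff)
        have sr: "set r \<subseteq> {1..L}" using Suc.prems(1) .
        have cb: "\<forall>y\<in>Acc L E r. real (card (Acc L E r)) \<le> c y" using acc sr hK h_def by blast
        have "(\<Sum>y\<in>Acc L E r. X / c y) \<le> (\<Sum>y\<in>Acc L E r. X / real (card (Acc L E r)))"
        proof (rule sum_mono)
          fix y assume "y \<in> Acc L E r"
          then show "X / c y \<le> X / real (card (Acc L E r))"
            using cb cardp X0 by (intro divide_left_mono) auto
        qed
        also have "\<dots> = X" using cardp by simp
        finally show ?thesis using hne by simp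
      qed
      finally show ?thesis .
    qed
    have "Gw L E a (Suc n) r = (\<Sum>y\<in>{1..L}. a y * Gw L E a n (y # r)) +
        (\<Sum>y\<in>{1..L}. a y * (case popx E y r of None \<Rightarrow> 0 | Some r' \<Rightarrow> Gw L E a n r'))"
      by (simp add: distrib_left sum.distrib)
    also have "\<dots> \<le> real (H n (Suc h)) * R^(Suc n - h) * P + (if h = 0 then 0 else X)"
      using T1 T2 by simp
    also have "\<dots> = real (H (Suc n) h) * R^(Suc n - h) * P"
      unfolding X_def by (simp add: algebra_simps)
    finally show ?thesis unfolding h_def P_def .
  qed
qed


lemma prod_concat_rep: "prod_list (concat (replicate p [x, y])) = ((x::'b::monoid_mult) * y)^p"
  by (induction p) (simp_all add: mult.assoc power_commutes)

lemma length_concat_rep: "length (concat (replicate p [x, y])) = 2 * p"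
  by (induction p) simp_all

lemma set_concat_rep: "set (concat (replicate p [x, y])) \<subseteq> {x, y}"
  by (induction p) auto

lemma map2_cmod:
  assumes "\<forall>c\<in>set cs. \<forall>i. cmod (c i) = a i"
  shows "length xs = length cs \<Longrightarrow> cmod (prod_list (map2 (\<lambda>c i. c i) cs xs)) = prod_list (map a xs)"
  using assms
proof (induction cs arbitrary: xs)
  case Nil then show ?case by simp
next
  case (Cons c cs)
  then obtain x xs' where xs: "xs = x # xs'" by (cases xs) auto
  show ?case using Cons unfolding xs by (simp add: norm_mult)
qed

lemma lst_rev: "rev ` lst L n = lst L n"
proof
  show "rev ` lst L n \<subseteq> lst L n" unfolding lst_def by auto
  show "lst L n \<subseteq> rev ` lst L n"
  proof
    fix xs assume "xs \<in> lst L n"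
    then have "rev xs \<in> lst L n" unfolding lst_def by auto
    then show "xs \<in> rev ` lst L n" by (metis image_eqI rev_rev_ident)
  qed
qed

lemma sum_lst_rev: "(\<Sum>xs\<in>lst L n. f (rev xs)) = (\<Sum>xs\<in>lst L n. f xs)"
proof -
  have "(\<Sum>xs\<in>lst L n. f (rev xs)) = (\<Sum>xs\<in>rev ` lst L n. f xs)"
    by (rule sum.reindex[symmetric, unfolded comp_def]) (simp add: inj_on_def)
  then show ?thesis unfolding lst_rev .
qed

lemma max_clique_ge:
  assumes "is_clique L E C" "y \<in> C"
  shows "card C \<le> max_clique_at L E y"
proof -
  have fin: "finite {card C | C. is_clique L E C \<and> y \<in> C}"
  proof (rule finite_subset)
    show "{card C | C. is_clique L E C \<and> y \<in> C} \<subseteq> card ` Pow {1..L}"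
      unfolding is_clique_def by auto
  qed simp
  show ?thesis unfolding max_clique_at_def using assms by (intro Max_ge[OF fin]) auto
qed

lemma max_clique_pos: "y \<in> {1..L} \<Longrightarrow> max_clique_at L E y \<ge> 1"
  using max_clique_ge[of L E "{y}" y] unfolding is_clique_def by auto

lemma max_clique_le_number: "y \<in> {1..L} \<Longrightarrow> max_clique_at L E y \<le> clique_number L E"
proof -
  assume y: "y \<in> {1..L}"
  have fin: "finite {card C | C. is_clique L E C}"
  proof (rule finite_subset)
    show "{card C | C. is_clique L E C} \<subseteq> card ` Pow {1..L}"
      unfolding is_clique_def by auto
  qed simp
  have cl: "is_clique L E {y}" using y unfolding is_clique_def by auto
  have ne: "{card C | C. is_clique L E C \<and> y \<in> C} \<noteq> {}"
    using cl by blast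
  have sub: "{card C | C. is_clique L E C \<and> y \<in> C} \<subseteq> {card C | C. is_clique L E C}"
    by (rule Collect_mono) blast
  show ?thesis unfolding max_clique_at_def clique_number_def
    by (rule Max_mono[OF sub ne fin])
qed

lemma Acc_is_clique: "symirr E \<Longrightarrow> is_clique L E (Acc L E r)"
  unfolding is_clique_def Acc_def using Acc_clique by blast

lemma Acc_card_clique:
  assumes "symirr E" "y \<in> Acc L E r"
  shows "real (card (Acc L E r)) \<le> real (max_clique_at L E y)"
  using max_clique_ge[OF Acc_is_clique[OF assms(1)] assms(2)] by simp

lemma Acc_card_len: "card (Acc L E r) \<le> length r"
  using card_mono[OF finite_set Acc_sub[of L E r]] card_length[of r] by simp

context
  fixes smul :: "complex \<Rightarrow> 'a::{real_normed_algebra_1,banach} \<Rightarrow> 'a"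
    and star :: "'a \<Rightarrow> 'a" and tau :: "'a \<Rightarrow> complex"
  assumes cs: "cstar_tracial_space smul star tau"
begin

lemma smul_one: "smul 1 x = x"
  using smul_real[OF cs, of 1 x] by simp

lemma expand_prod:
  "prod_list (map (\<lambda>c. \<Sum>i\<in>{1..L}. smul (c i) (s i)) cs) =
   (\<Sum>xs\<in>lst L (length cs). smul (prod_list (map2 (\<lambda>c i. c i) cs xs)) (prod_list (map s xs)))"
proof (induction cs)
  case Nil
  have "lst L 0 = {[]}" unfolding lst_def by auto
  then show ?case by (simp add: smul_one)
next
  case (Cons c cs)
  have "prod_list (map (\<lambda>c. \<Sum>i\<in>{1..L}. smul (c i) (s i)) (c # cs)) =
      (\<Sum>i\<in>{1..L}. smul (c i) (s i)) * (\<Sum>xs\<in>lst L (length cs). smul (prod_list (map2 (\<lambda>c i. c i) cs xs)) (prod_list (map s xs)))"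
    using Cons by simp
  also have "\<dots> = (\<Sum>i\<in>{1..L}. \<Sum>xs\<in>lst L (length cs). smul (c i) (s i) * smul (prod_list (map2 (\<lambda>c i. c i) cs xs)) (prod_list (map s xs)))"
    by (simp add: sum_distrib_left sum_distrib_right sum.swap[of _ "lst L (length cs)"])
  also have "\<dots> = (\<Sum>i\<in>{1..L}. \<Sum>xs\<in>lst L (length cs). smul (prod_list (map2 (\<lambda>c i. c i) (c # cs) (i # xs))) (prod_list (map s (i # xs))))"
    by (simp add: smul_mult_mult[OF cs])
  also have "\<dots> = (\<Sum>xs\<in>lst L (length (c # cs)). smul (prod_list (map2 (\<lambda>c i. c i) (c # cs) xs)) (prod_list (map s xs)))"
    by (simp add: sum_lst_Suc)
  finally show ?case .
qed

lemma tau_smul_sum: "tau (\<Sum>xs\<in>S. smul (f xs) (g xs)) = (\<Sum>xs\<in>S. f xs * tau (g xs))"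
  by (simp add: tau_sum[OF cs] tau_smul[OF cs])

end


lemma min_pow:
  assumes "0 \<le> x" "0 \<le> y"
  shows "(min x y) ^ n = min (x ^ n) ((y::real) ^ n)"
proof (cases "x \<le> y")
  case True
  then have "x ^ n \<le> y ^ n" using assms by (intro power_mono)
  then show ?thesis using True by (simp add: min_def)
next
  case False
  then have "y ^ n \<le> x ^ n" using assms by (intro power_mono) auto
  then show ?thesis using False by (simp add: min_def)
qed

lemma prod_map_rev: "prod_list (map a (rev xs)) = prod_list (map (a::nat \<Rightarrow> real) xs)"
  by (induction xs) (simp_all add: mult.commute)

lemma powr_bound:
  fixes X C m :: real and p :: nat
  assumes "p \<ge> 1" "0 \<le> X" "X \<le> C * m ^ p" "0 \<le> C" "0 \<le> m"
  shows "X powr (1 / (2 * real p)) \<le> C powr (1 / (2 * real p)) * sqrt m"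
proof -
  have "X powr (1 / (2 * real p)) \<le> (C * m ^ p) powr (1 / (2 * real p))"
    using assms by (intro powr_mono2) auto
  also have "\<dots> = C powr (1 / (2 * real p)) * (m ^ p) powr (1 / (2 * real p))"
    by (rule powr_mult)
  also have "(m ^ p) powr (1 / (2 * real p)) = sqrt m"
  proof (cases "m = 0")
    case True then show ?thesis using assms(1) by simp
  next
    case False
    then have mp: "m > 0" using assms by simp
    have "(m ^ p) powr (1 / (2 * real p)) = (m powr real p) powr (1 / (2 * real p))"
      using powr_realpow[OF mp] by simp
    also have "\<dots> = m powr (1/2)" unfolding powr_powr using assms(1) by simp
    also have "\<dots> = sqrt m" using powr_half_sqrt assms by simp
    finally show ?thesis .
  qed
  finally show ?thesis .
qed

theorem theorem1p1:
  fixes smul :: "complex \<Rightarrow> 'a::{real_normed_algebra_1,banach} \<Rightarrow> 'a"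
    and star :: "'a \<Rightarrow> 'a" and tau :: "'a \<Rightarrow> complex"
    and L :: nat and E :: "nat \<Rightarrow> nat \<Rightarrow> bool"
    and s :: "nat \<Rightarrow> 'a" and \<alpha> :: "nat \<Rightarrow> complex" and p :: nat
  assumes "cstar_tracial_space smul star tau"
    and "simple_graph L E"
    and "\<forall>i\<in>{1..L}. semicircle_var star tau (s i)"
    and "G_independent L E tau (\<lambda>i. gen_star_alg smul star (s i))"
    and "p \<ge> 1"
  shows "norm_2p star tau p (\<Sum>i=1..L. smul (\<alpha> i) (s i))
           \<le> catalan p powr (1 / (2 * real p)) *
             sqrt (min (\<Sum>i=1..L. (cmod (\<alpha> i))\<^sup>2 * real (max_clique_at L E i))
                       (real p * (\<Sum>i=1..L. (cmod (\<alpha> i))\<^sup>2)))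
       \<and> norm_2p star tau p (\<Sum>i=1..L. smul (\<alpha> i) (s i))
           \<le> catalan p powr (1 / (2 * real p)) *
             sqrt (real (min (clique_number L E) p)) * sqrt (\<Sum>i=1..L. (cmod (\<alpha> i))\<^sup>2)"
proof -
  note cs = assms(1) and sg = assms(2) and sc = assms(3) and gi = assms(4) and p1 = assms(5)
  have se: "symirr E" using simple_symirr[OF sg] .
  define u where "u = (\<Sum>i=1..L. smul (\<alpha> i) (s i))"
  define a where "a i = cmod (\<alpha> i)" for i
  define W where "W = (\<Sum>i=1..L. (cmod (\<alpha> i))\<^sup>2)"
  define A where "A = (\<Sum>i=1..L. (cmod (\<alpha> i))\<^sup>2 * real (max_clique_at L E i))"
  define X where "X = Re (tau ((u * star u) ^ p))"
  define cf where "cf = concat (replicate p [\<alpha>, (\<lambda>i. cnj (\<alpha> i))])"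
  define g where "g i = (i, 1::nat)" for i :: nat
  have a0: "\<forall>y. a y \<ge> 0" unfolding a_def by simp
  have su: "star u = (\<Sum>i=1..L. smul (cnj (\<alpha> i)) (s i))"
  proof -
    have "star u = (\<Sum>i=1..L. smul (cnj (\<alpha> i)) (star (s i)))"
      unfolding u_def by (simp add: star_sum[OF cs] star_smul[OF cs])
    also have "\<dots> = (\<Sum>i=1..L. smul (cnj (\<alpha> i)) (s i))"
      using sc unfolding semicircle_var_def by (intro sum.cong refl) auto
    finally show ?thesis .
  qed
  have pe: "(u * star u) ^ p = prod_list (map (\<lambda>c. \<Sum>i\<in>{1..L}. smul (c i) (s i)) cf)"
  proof -
    have "(u * star u) ^ p = prod_list (concat (replicate p [u, star u]))" by (simp add: prod_concat_rep)
    also have "\<dots> = prod_list (map (\<lambda>c. \<Sum>i\<in>{1..L}. smul (c i) (s i)) cf)"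
      unfolding cf_def su unfolding u_def by (simp add: map_concat)
    finally show ?thesis .
  qed
  have lcf: "length cf = 2 * p" unfolding cf_def by (rule length_concat_rep)
  define co where "co xs = prod_list (map2 (\<lambda>c i. c i) cf xs)" for xs
  have tau_exp: "tau ((u * star u) ^ p) = (\<Sum>xs\<in>lst L (2*p). co xs * of_nat (cntp E (rev (map g xs)) []))"
  proof -
    have "tau ((u * star u) ^ p) = (\<Sum>xs\<in>lst L (2*p). co xs * tau (prod_list (map s xs)))"
      unfolding pe expand_prod[OF cs] lcf co_def by (rule tau_smul_sum[OF cs])
    also have "\<dots> = (\<Sum>xs\<in>lst L (2*p). co xs * of_nat (cntp E (rev (map g xs)) []))"
    proof (intro sum.cong refl)
      fix xs assume "xs \<in> lst L (2*p)"
      then have "set xs \<subseteq> {1..L}" unfolding lst_def by simp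
      then show "co xs * tau (prod_list (map s xs)) = co xs * of_nat (cntp E (rev (map g xs)) [])"
        unfolding g_def using tau_word[OF cs sg sc gi] by simp
    qed
    finally show ?thesis .
  qed
  have cmod_co: "cmod (co xs) = prod_list (map a xs)" if "xs \<in> lst L (2*p)" for xs
  proof -
    have "\<forall>c\<in>set cf. \<forall>i. cmod (c i) = a i"
      using set_concat_rep[of p \<alpha> "\<lambda>i. cnj (\<alpha> i)"] unfolding cf_def a_def by auto
    moreover have "length xs = length cf" using that lcf unfolding lst_def by simp
    ultimately show ?thesis unfolding co_def by (rule map2_cmod)
  qed
  have XG: "X \<le> Gw L E a (2*p) []"
  proof -
    have "X = (\<Sum>xs\<in>lst L (2*p). Re (co xs * of_nat (cntp E (rev (map g xs)) [])))"
      unfolding X_def tau_exp by simp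
    also have "\<dots> \<le> (\<Sum>xs\<in>lst L (2*p). prod_list (map a xs) * real (cntp E (rev (map g xs)) []))"
    proof (rule sum_mono)
      fix xs assume xs: "xs \<in> lst L (2*p)"
      have "Re (co xs * of_nat (cntp E (rev (map g xs)) [])) \<le> cmod (co xs * of_nat (cntp E (rev (map g xs)) []))"
        by (rule complex_Re_le_cmod)
      also have "\<dots> = prod_list (map a xs) * real (cntp E (rev (map g xs)) [])"
        using cmod_co[OF xs] by (simp add: norm_mult)
      finally show "Re (co xs * of_nat (cntp E (rev (map g xs)) [])) \<le> prod_list (map a xs) * real (cntp E (rev (map g xs)) [])" .
    qed
    also have "\<dots> = (\<Sum>xs\<in>lst L (2*p). (\<lambda>ys. prod_list (map a ys) * real (cntp E (map g ys) [])) (rev xs))"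
      by (simp add: rev_map prod_map_rev)
    also have "\<dots> = (\<Sum>xs\<in>lst L (2*p). prod_list (map a xs) * real (cntp E (map g xs) []))"
      by (rule sum_lst_rev)
    also have "\<dots> = Gw L E a (2*p) []" unfolding g_def by (rule sum_lst_Gw)
    finally show ?thesis .
  qed
  have X0: "X \<ge> 0"
  proof -
    define v where "v = u * star u"
    have sv: "star v = v" unfolding v_def by (simp add: star_mult[OF cs] star_star[OF cs])
    obtain k where k: "p = 2 * k \<or> p = 2 * k + 1" by (metis oddE evenE)
    then show ?thesis
    proof
      assume pk: "p = 2 * k"
      have "v ^ p = star (v ^ k) * v ^ k"
        unfolding pk star_pow_comm[OF cs] sv by (simp add: power_add[symmetric] mult_2)
      then show ?thesis unfolding X_def v_def[symmetric] using tau_pos[OF cs] by simp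
    next
      assume pk: "p = 2 * k + 1"
      have "star (star u * v ^ k) = v ^ k * u"
        by (simp add: star_mult[OF cs] star_star[OF cs] star_pow_comm[OF cs] sv)
      then have "star (star u * v ^ k) * (star u * v ^ k) = v ^ k * v * v ^ k"
        unfolding v_def by (simp add: mult.assoc)
      also have "\<dots> = v ^ p" unfolding pk by (simp add: power_add mult_2 power_commutes mult.assoc)
      finally show ?thesis unfolding X_def v_def[symmetric] using tau_pos[OF cs, of "star u * v ^ k"] by simp
    qed
  qed
  have cat: "catalan p = real (H (2*p) 0)" unfolding catalan_def by (simp add: H_catalan)
  have B1: "X \<le> catalan p * A ^ p"
  proof -
    define c where "c y = real (max_clique_at L E y)" for y
    define R where "R = sqrt (\<Sum>y\<in>{1..L}. a y * (c y * a y))"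
    have S: "(\<Sum>y\<in>{1..L}. a y * (c y * a y)) = A" unfolding A_def a_def c_def
      by (intro sum.cong refl) (simp add: power2_eq_square)
    have A0: "A \<ge> 0" unfolding A_def by (intro sum_nonneg) simp
    have R2: "R^2 = (\<Sum>y\<in>{1..L}. a y * (c y * a y))" unfolding R_def S using A0 by simp
    have c0: "\<forall>y\<in>{1..L}. c y > 0"
    proof
      fix y :: nat assume y: "y \<in> {1..L}"
      have "max_clique_at L E y \<ge> 1" by (rule max_clique_pos[OF y])
      then show "c y > 0" unfolding c_def by simp
    qed
    have acc: "\<forall>r. set r \<subseteq> {1..L} \<longrightarrow> length r \<le> p \<longrightarrow> (\<forall>y\<in>Acc L E r. real (card (Acc L E r)) \<le> c y)"
      unfolding c_def using Acc_card_clique[OF se] by blast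
    have "Gw L E a (2*p) [] \<le> real (H (2*p) (length ([]::nat list))) * R^(2*p - length ([]::nat list)) * prod_list (map (\<lambda>u. c u * a u) [])"
      using Gw_bound[OF se a0 c0 acc _ R2, of "[]" "2*p"] S A0 unfolding R_def by simp
    also have "\<dots> = catalan p * A ^ p" unfolding cat using R2 S by (simp add: power_mult)
    finally show ?thesis using XG by simp
  qed
  have B2: "X \<le> catalan p * (real p * W) ^ p"
  proof -
    define c where "c y = real p" for y :: nat
    define R where "R = sqrt (\<Sum>y\<in>{1..L}. a y * (c y * a y))"
    have S: "(\<Sum>y\<in>{1..L}. a y * (c y * a y)) = real p * W" unfolding W_def a_def c_def
      by (simp add: sum_distrib_left power2_eq_square algebra_simps)
    have W0: "W \<ge> 0" unfolding W_def by (intro sum_nonneg) simp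
    have R2: "R^2 = (\<Sum>y\<in>{1..L}. a y * (c y * a y))" unfolding R_def S using W0 by simp
    have c0: "\<forall>y\<in>{1..L}. c y > 0" unfolding c_def using p1 by simp
    have acc: "\<forall>r. set r \<subseteq> {1..L} \<longrightarrow> length r \<le> p \<longrightarrow> (\<forall>y\<in>Acc L E r. real (card (Acc L E r)) \<le> c y)"
      unfolding c_def using Acc_card_len by (metis order_trans of_nat_le_iff)
    have "Gw L E a (2*p) [] \<le> real (H (2*p) (length ([]::nat list))) * R^(2*p - length ([]::nat list)) * prod_list (map (\<lambda>u. c u * a u) [])"
      using Gw_bound[OF se a0 c0 acc _ R2, of "[]" "2*p"] S W0 p1 unfolding R_def by simp
    also have "\<dots> = catalan p * (real p * W) ^ p" unfolding cat using R2 S by (simp add: power_mult)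
    finally show ?thesis using XG by simp
  qed
  have A0: "A \<ge> 0" unfolding A_def by (intro sum_nonneg) simp
  have W0: "W \<ge> 0" unfolding W_def by (intro sum_nonneg) simp
  define m where "m = min A (real p * W)"
  have m0: "m \<ge> 0" unfolding m_def using A0 W0 by simp
  have cat0: "catalan p \<ge> 0" unfolding catalan_def by simp
  have Xm: "X \<le> catalan p * m ^ p"
    unfolding m_def min_pow[OF A0 mult_nonneg_nonneg[OF of_nat_0_le_iff W0]]
    using B1 B2 by (simp add: min_mult_distrib_left cat0)
  have main: "norm_2p star tau p u \<le> catalan p powr (1 / (2 * real p)) * sqrt m"
    unfolding norm_2p_def X_def[symmetric] by (rule powr_bound[OF p1 X0 Xm cat0 m0])
  have AW: "A \<le> real (clique_number L E) * W"
  proof -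
    have "A \<le> (\<Sum>i=1..L. (cmod (\<alpha> i))\<^sup>2 * real (clique_number L E))"
      unfolding A_def by (intro sum_mono mult_left_mono) (auto simp: max_clique_le_number)
    then show ?thesis unfolding W_def by (simp add: sum_distrib_left algebra_simps)
  qed
  have m2: "m \<le> real (min (clique_number L E) p) * W"
    unfolding m_def using AW W0 by (auto simp: min_def mult_right_mono)
  have "sqrt m \<le> sqrt (real (min (clique_number L E) p)) * sqrt W"
    using m2 by (simp add: real_sqrt_mult[symmetric])
  then have second: "catalan p powr (1 / (2 * real p)) * sqrt m \<le> catalan p powr (1 / (2 * real p)) * sqrt (real (min (clique_number L E) p)) * sqrt W"
    by (simp add: mult.assoc mult_left_mono)
  show ?thesis using main second unfolding u_def m_def A_def W_def by simp
qed


end
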